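(* There is an absolute constant $C$ such that, for the Adaptive-Threshold Dealer with any $n,d$ and every turn $t$ of the Adaptive phase, the expected number of mini-deck samples performed at turn $t$ until a suitable mini-deck is found is at most $C$; i.e. each turn of the Adaptive phase runs in expected constant time.
   Context: Adaptive-Threshold Dealer with $d$ mini-decks on $n$ cards ($d\mid n$): the deck is split into $d$ mini-decks, each a fixed ordered stack of $n/d$ cards. Let $L_{i,t}$ be the number of cards drawn from mini-deck $i$ before turn $t$. Adaptive phase (turns $t=1,\dots,n-2d$): repeatedly sample $i\in[d]$ uniformly at random until $L_{i,t}<\lceil t/d\rceil+1$ (a suitable mini-deck), then draw the top card of mini-deck $i$. Final phase (last $2d$ turns): remaining cards drawn in uniformly random order. *)

theory Defs
  imports "HOL-Probability.Probability"
begin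

text \<open>A load vector L :: nat => nat gives, for each mini-deck i, the number of cards
  already drawn from it.\<close>

definition ATD_threshold :: "nat \<Rightarrow> nat \<Rightarrow> nat" where
  "ATD_threshold d t = nat \<lceil>real t / real d\<rceil> + 1"

definition ATD_suitable :: "nat \<Rightarrow> (nat \<Rightarrow> nat) \<Rightarrow> nat \<Rightarrow> nat \<Rightarrow> bool" where
  "ATD_suitable d L t i \<longleftrightarrow> i < d \<and> L i < ATD_threshold d t"

text \<open>Given the i.i.d. stream xs of uniform samples from the d mini-decks used at
  turn t, the number of samples performed (including the successful one) and the
  mini-deck finally chosen.\<close>

definition ATD_nsamples :: "nat \<Rightarrow> (nat \<Rightarrow> nat) \<Rightarrow> nat \<Rightarrow> nat stream \<Rightarrow> nat" where
  "ATD_nsamples d L t xs = Suc (LEAST k. ATD_suitable d L t (xs !! k))"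

definition ATD_pick :: "nat \<Rightarrow> (nat \<Rightarrow> nat) \<Rightarrow> nat \<Rightarrow> nat stream \<Rightarrow> nat" where
  "ATD_pick d L t xs = xs !! (LEAST k. ATD_suitable d L t (xs !! k))"

text \<open>The randomness: omega !! t is the stream of samples used at turn t
  (omega !! 0 is unused).  ATD_L d omega t = L_{.,t}, the loads before turn t.\<close>

fun ATD_L :: "nat \<Rightarrow> nat stream stream \<Rightarrow> nat \<Rightarrow> nat \<Rightarrow> nat" where
  "ATD_L d \<omega> 0 = (\<lambda>i. 0)"
| "ATD_L d \<omega> (Suc 0) = (\<lambda>i. 0)"
| "ATD_L d \<omega> (Suc (Suc m)) =
     (let L = ATD_L d \<omega> (Suc m); c = ATD_pick d L (Suc m) (\<omega> !! Suc m)
      in L(c := L c + 1))"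

definition ATD_space :: "nat \<Rightarrow> nat stream stream measure" where
  "ATD_space d = stream_space (stream_space (measure_pmf (pmf_of_set {..<d})))"

end

theory Submission
  imports Defs
begin


definition SS :: "nat \<Rightarrow> nat \<Rightarrow> (nat \<Rightarrow> nat) \<Rightarrow> nat set" where
  "SS d th L = {j. j < d \<and> L j < th}"

definition up :: "(nat \<Rightarrow> nat) \<Rightarrow> nat \<Rightarrow> nat \<Rightarrow> nat" where
  "up L j = L(j := Suc (L j))"

definition OE :: "nat \<Rightarrow> nat \<Rightarrow> (nat \<Rightarrow> nat) \<Rightarrow> ((nat \<Rightarrow> nat) \<Rightarrow> real) \<Rightarrow> real" where
  "OE d th L g = (\<Sum>j\<in>SS d th L. g (up L j)) / real (card (SS d th L))"

definition wt :: "nat \<Rightarrow> nat \<Rightarrow> real \<Rightarrow> nat \<Rightarrow> (nat \<Rightarrow> nat) \<Rightarrow> nat \<Rightarrow> real" where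
  "wt d th mu i L j = (if i \<in> SS d th L then (if j = i then mu else 1) / (real (card (SS d th L)) - (1 - mu))
      else 1 / real (card (SS d th L)))"

definition TE :: "nat \<Rightarrow> nat \<Rightarrow> real \<Rightarrow> nat \<Rightarrow> (nat \<Rightarrow> nat) \<Rightarrow> ((nat \<Rightarrow> nat) \<Rightarrow> real) \<Rightarrow> real" where
  "TE d th mu i L g = (\<Sum>j\<in>SS d th L. wt d th mu i L j * g (up L j))"

lemma SS_finite[simp]: "finite (SS d th L)"
  unfolding SS_def by auto

lemma SS_sub: "SS d th L \<subseteq> {..<d}"
  unfolding SS_def by auto

lemma card_SS_le: "card (SS d th L) \<le> d"
  using card_mono[OF _ SS_sub] by fastforce

lemma up_same[simp]: "up L j j = Suc (L j)"
  by (simp add: up_def)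

lemma up_other[simp]: "k \<noteq> j \<Longrightarrow> up L j k = L k"
  by (simp add: up_def)

lemma OE_mono:
  assumes "\<And>j. j \<in> SS d th L \<Longrightarrow> g (up L j) \<le> h (up L j)"
  shows "OE d th L g \<le> OE d th L h"
  unfolding OE_def using assms by (intro divide_right_mono sum_mono) auto

lemma OE_nonneg:
  assumes "\<And>j. j \<in> SS d th L \<Longrightarrow> 0 \<le> g (up L j)"
  shows "0 \<le> OE d th L g"
  unfolding OE_def using assms by (intro divide_nonneg_nonneg sum_nonneg) auto

lemma OE_add: "OE d th L (\<lambda>x. g x + h x) = OE d th L g + OE d th L h"
  unfolding OE_def by (simp add: sum.distrib add_divide_distrib)

lemma OE_cmult: "OE d th L (\<lambda>x. c * g x) = c * OE d th L g"
  unfolding OE_def by (simp add: sum_distrib_left)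

lemma OE_sum: "OE d th L (\<lambda>x. \<Sum>k\<in>A. g k x) = (\<Sum>k\<in>A. OE d th L (g k))"
  unfolding OE_def by (simp add: sum.swap[of _ A] sum_divide_distrib)

lemma OE_const: "SS d th L \<noteq> {} \<Longrightarrow> OE d th L (\<lambda>_. c) = c"
  unfolding OE_def by (simp add: card_gt_0_iff)

lemma OE_le_const:
  assumes "0 \<le> c" "\<And>j. j \<in> SS d th L \<Longrightarrow> g (up L j) \<le> c"
  shows "OE d th L g \<le> c"
proof (cases "SS d th L = {}")
  case True then show ?thesis using assms by (simp add: OE_def)
next
  case False
  have "OE d th L g \<le> OE d th L (\<lambda>_. c)" by (rule OE_mono) (use assms in auto)
  then show ?thesis using OE_const[OF False] by simp
qed

lemma card_SS_ge1: "j \<in> SS d th L \<Longrightarrow> real (card (SS d th L)) \<ge> 1"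
proof -
  assume "j \<in> SS d th L"
  then have "card (SS d th L) > 0" using card_gt_0_iff by fastforce
  then show ?thesis by linarith
qed

lemma wt_nonneg: assumes "0 < mu" "mu \<le> 1" shows "0 \<le> wt d th mu i L j"
proof (cases "i \<in> SS d th L")
  case True
  have "real (card (SS d th L)) - (1 - mu) > 0" using card_SS_ge1[OF True] assms by linarith
  then show ?thesis using True assms unfolding wt_def by simp
next
  case False
  then show ?thesis unfolding wt_def by simp
qed

lemma sum_inv_card: "finite A \<Longrightarrow> A \<noteq> {} \<Longrightarrow> (\<Sum>j\<in>A. 1 / real (card A)) = 1"
  by simp

lemma sum_if_mu: "finite A \<Longrightarrow> i \<in> A \<Longrightarrow> (\<Sum>j\<in>A. (if j = i then mu else (1::real))) = (mu - 1) + real (card A)"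
proof -
  assume A: "finite A" "i \<in> A"
  have "(\<Sum>j\<in>A. (if j = i then mu else (1::real))) = (\<Sum>j\<in>A. (if j = i then mu - 1 else 0) + 1)"
    by (intro sum.cong) auto
  also have "\<dots> = (mu - 1) + real (card A)" using A by (simp add: sum.distrib)
  finally show ?thesis .
qed

lemma wt_in: assumes "i \<in> SS d th L"
  shows "wt d th mu i L j = (if j = i then mu else 1) / (real (card (SS d th L)) - (1 - mu))"
  using assms unfolding wt_def by simp

lemma wt_notin: assumes "i \<notin> SS d th L" shows "wt d th mu i L j = 1 / real (card (SS d th L))"
  using assms unfolding wt_def by simp

lemma wt_sum:
  assumes "0 < mu" "mu \<le> 1" "SS d th L \<noteq> {}"
  shows "(\<Sum>j\<in>SS d th L. wt d th mu i L j) = 1"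
proof (cases "i \<in> SS d th L")
  case True
  have s1: "real (card (SS d th L)) \<ge> 1" using card_SS_ge1[OF True] by simp
  have "(\<Sum>j\<in>SS d th L. wt d th mu i L j) = (\<Sum>j\<in>SS d th L. (if j = i then mu else 1) / (real (card (SS d th L)) - (1 - mu)))"
    by (rule sum.cong[OF refl], rule wt_in[OF True])
  also have "\<dots> = (\<Sum>j\<in>SS d th L. (if j = i then mu else 1)) / (real (card (SS d th L)) - (1 - mu))"
    by (rule sum_divide_distrib[symmetric])
  also have "\<dots> = ((mu - 1) + real (card (SS d th L))) / (real (card (SS d th L)) - (1 - mu))"
    by (subst sum_if_mu[OF SS_finite True]) (rule refl)
  also have "\<dots> = 1"
  proof -
    have "real (card (SS d th L)) - (1 - mu) \<noteq> 0" using s1 assms by linarith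
    moreover have "(mu - 1) + real (card (SS d th L)) = real (card (SS d th L)) - (1 - mu)" by simp
    ultimately show ?thesis by (metis divide_self)
  qed
  finally show ?thesis .
next
  case False
  have "(\<Sum>j\<in>SS d th L. wt d th mu i L j) = (\<Sum>j\<in>SS d th L. 1 / real (card (SS d th L)))"
    by (rule sum.cong[OF refl], rule wt_notin[OF False])
  also have "\<dots> = 1" by (rule sum_inv_card[OF SS_finite assms(3)])
  finally show ?thesis .
qed

lemma wt_sum_le:
  assumes "0 < mu" "mu \<le> 1"
  shows "(\<Sum>j\<in>SS d th L. wt d th mu i L j) \<le> 1"
proof (cases "SS d th L = {}")
  case True then show ?thesis by simp
next
  case False then show ?thesis using wt_sum[OF assms False] by simp
qed

lemma wt_lower:
  assumes "0 < mu" "mu \<le> 1" "j \<in> SS d th L" "j \<noteq> i"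
  shows "wt d th mu i L j \<ge> 1 / real d"
proof -
  define s where "s = real (card (SS d th L))"
  have s1: "s \<ge> 1" using card_SS_ge1[OF assms(3)] s_def by simp
  have sd: "s \<le> real d" using card_SS_le s_def by simp
  show ?thesis
  proof (cases "i \<in> SS d th L")
    case True
    then have "wt d th mu i L j = 1 / (s - (1 - mu))" unfolding wt_in[OF True] s_def using assms(4) by simp
    moreover have "1 / real d \<le> 1 / (s - (1 - mu))"
    proof (rule divide_left_mono)
      show "s - (1 - mu) \<le> real d" using sd assms by linarith
      show "0 < real d * (s - (1 - mu))" using s1 sd assms by (intro mult_pos_pos) linarith+
    qed simp
    ultimately show ?thesis by simp
  next
    case False
    then have "wt d th mu i L j = 1 / s" unfolding wt_notin[OF False] s_def by simp
    moreover have "1 / real d \<le> 1 / s"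
    proof (rule divide_left_mono)
      show "s \<le> real d" using sd .
      show "0 < real d * s" using s1 sd by (intro mult_pos_pos) linarith+
    qed simp
    ultimately show ?thesis by simp
  qed
qed

lemma TE_mono:
  assumes "0 < mu" "mu \<le> 1" "\<And>j. j \<in> SS d th L \<Longrightarrow> g (up L j) \<le> h (up L j)"
  shows "TE d th mu i L g \<le> TE d th mu i L h"
  unfolding TE_def using assms wt_nonneg[OF assms(1,2)]
  by (intro sum_mono mult_left_mono) auto

lemma TE_nonneg:
  assumes "0 < mu" "mu \<le> 1" "\<And>j. j \<in> SS d th L \<Longrightarrow> 0 \<le> g (up L j)"
  shows "0 \<le> TE d th mu i L g"
  unfolding TE_def using assms wt_nonneg[OF assms(1,2)]
  by (intro sum_nonneg mult_nonneg_nonneg) auto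

lemma TE_add: "TE d th mu i L (\<lambda>x. g x + h x) = TE d th mu i L g + TE d th mu i L h"
  unfolding TE_def by (simp add: sum.distrib distrib_left)

lemma TE_cmult: "TE d th mu i L (\<lambda>x. c * g x) = c * TE d th mu i L g"
  unfolding TE_def by (simp add: sum_distrib_left mult.left_commute)

lemma TE_sum: "TE d th mu i L (\<lambda>x. \<Sum>k\<in>A. g k x) = (\<Sum>k\<in>A. TE d th mu i L (g k))"
  unfolding TE_def by (simp add: sum.swap[of _ A] sum_distrib_left)

lemma TE_const: "0 < mu \<Longrightarrow> mu \<le> 1 \<Longrightarrow> SS d th L \<noteq> {} \<Longrightarrow> TE d th mu i L (\<lambda>_. c) = c"
  unfolding TE_def using wt_sum[of mu d th L i] by (simp add: sum_distrib_right[symmetric])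

lemma TE_le_const:
  assumes "0 < mu" "mu \<le> 1" "0 \<le> c" "\<And>j. j \<in> SS d th L \<Longrightarrow> g (up L j) \<le> c"
  shows "TE d th mu i L g \<le> c"
proof -
  have "TE d th mu i L g \<le> TE d th mu i L (\<lambda>_. c)" by (rule TE_mono) (use assms in auto)
  also have "\<dots> = c * (\<Sum>j\<in>SS d th L. wt d th mu i L j)"
    unfolding TE_def by (simp add: sum_distrib_left mult.commute)
  also have "\<dots> \<le> c * 1" using wt_sum_le[OF assms(1,2)] assms(3) by (intro mult_left_mono) auto
  finally show ?thesis by simp
qed


fun itO :: "nat \<Rightarrow> nat \<Rightarrow> nat \<Rightarrow> ((nat \<Rightarrow> nat) \<Rightarrow> real) \<Rightarrow> (nat \<Rightarrow> nat) \<Rightarrow> real" where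
  "itO d th 0 g L = g L"
| "itO d th (Suc n) g L = OE d th L (itO d th n g)"

fun TEit :: "nat \<Rightarrow> nat \<Rightarrow> real \<Rightarrow> nat \<Rightarrow> nat \<Rightarrow> ((nat \<Rightarrow> nat) \<Rightarrow> real) \<Rightarrow> (nat \<Rightarrow> nat) \<Rightarrow> real" where
  "TEit d th mu i 0 g L = g L"
| "TEit d th mu i (Suc n) g L = TE d th mu i L (TEit d th mu i n g)"

fun VV :: "nat \<Rightarrow> nat \<Rightarrow> real \<Rightarrow> nat \<Rightarrow> nat \<Rightarrow> (nat \<Rightarrow> nat) \<Rightarrow> real" where
  "VV d th mu i 0 L = 1"
| "VV d th mu i (Suc n) L = (1 - (1 - mu) / real (card (SS d th L))) * TE d th mu i L (VV d th mu i n)"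

definition xx :: "nat \<Rightarrow> nat \<Rightarrow> real \<Rightarrow> (nat \<Rightarrow> nat) \<Rightarrow> real" where
  "xx d th mu L = (1 - mu) * (real d - real (card (SS d th L))) / (real d)^2"

fun XX :: "nat \<Rightarrow> nat \<Rightarrow> real \<Rightarrow> nat \<Rightarrow> nat \<Rightarrow> (nat \<Rightarrow> nat) \<Rightarrow> real" where
  "XX d th mu i 0 L = 0"
| "XX d th mu i (Suc n) L = xx d th mu L + TE d th mu i L (XX d th mu i n)"

lemma SS_iff: "j \<in> SS d th L \<longleftrightarrow> j < d \<and> L j < th"
  unfolding SS_def by simp

lemma SS_nonempty: "j \<in> SS d th L \<Longrightarrow> SS d th L \<noteq> {}"
  by blast

lemma TE_cong: "(\<And>j. j \<in> SS d th L \<Longrightarrow> g (up L j) = h (up L j)) \<Longrightarrow> TE d th mu i L g = TE d th mu i L h"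
  unfolding TE_def by (intro sum.cong) auto

lemma OE_cong: "(\<And>j. j \<in> SS d th L \<Longrightarrow> g (up L j) = h (up L j)) \<Longrightarrow> OE d th L g = OE d th L h"
  unfolding OE_def by (intro arg_cong2[where f="(/)"] sum.cong) auto

lemma TE_zero: "TE d th mu i L (\<lambda>_. 0) = 0"
  unfolding TE_def by simp

lemma cap_up:
  assumes "j \<in> SS d th L"
  shows "(\<Sum>k<d. th - up L j k) + 1 = (\<Sum>k<d. th - L k)"
proof -
  have jd: "j < d" and lj: "L j < th" using assms SS_iff by auto
  have "(\<Sum>k<d. th - L k) = (th - L j) + (\<Sum>k\<in>{..<d}-{j}. th - L k)"
    using jd by (simp add: sum.remove)
  moreover have "(\<Sum>k<d. th - up L j k) = (th - up L j j) + (\<Sum>k\<in>{..<d}-{j}. th - up L j k)"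
    using jd by (simp add: sum.remove)
  moreover have "(\<Sum>k\<in>{..<d}-{j}. th - up L j k) = (\<Sum>k\<in>{..<d}-{j}. th - L k)"
    by (intro sum.cong) auto
  ultimately show ?thesis using lj by simp
qed

lemma cap_pos_SS:
  assumes "0 < (\<Sum>k<d. th - L k)"
  shows "SS d th L \<noteq> {}"
proof (rule ccontr)
  assume "\<not> SS d th L \<noteq> {}"
  then have e: "SS d th L = {}" by (rule notnotD)
  have "\<forall>k\<in>{..<d}. th - L k = 0"
  proof
    fix k assume k: "k \<in> {..<d}"
    have "k \<notin> SS d th L" using e by (rule equals0D)
    then have "\<not> (k < d \<and> L k < th)" unfolding SS_iff .
    then show "th - L k = 0" using k by simp
  qed
  then have "(\<Sum>k<d. th - L k) = 0" by (rule sum.neutral)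
  with assms show False by linarith
qed

lemma itO_mono_inv:
  assumes inv: "\<And>L j. P L \<Longrightarrow> j \<in> SS d th L \<Longrightarrow> P (up L j)"
    and le: "\<And>L. P L \<Longrightarrow> g L \<le> h L" and "P L"
  shows "itO d th n g L \<le> itO d th n h L"
  using assms(3)
proof (induction n arbitrary: L)
  case 0 then show ?case using le by simp
next
  case (Suc n) then show ?case by (simp, intro OE_mono) (auto intro: inv)
qed

lemma itO_add: "itO d th n (\<lambda>x. g x + h x) L = itO d th n g L + itO d th n h L"
proof (induction n arbitrary: L)
  case 0 then show ?case by simp
next
  case (Suc n)
  have e: "itO d th n (\<lambda>x. g x + h x) = (\<lambda>x. itO d th n g x + itO d th n h x)"
    by (rule ext) (rule Suc.IH)
  have "itO d th (Suc n) (\<lambda>x. g x + h x) L = OE d th L (\<lambda>x. itO d th n g x + itO d th n h x)"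
    by (simp only: itO.simps e)
  then show ?case by (simp add: OE_add)
qed

lemma itO_cmult: "itO d th n (\<lambda>x. c * g x) L = c * itO d th n g L"
proof (induction n arbitrary: L)
  case 0 then show ?case by simp
next
  case (Suc n)
  have e: "itO d th n (\<lambda>x. c * g x) = (\<lambda>x. c * itO d th n g x)"
    by (rule ext) (rule Suc.IH)
  have "itO d th (Suc n) (\<lambda>x. c * g x) L = OE d th L (\<lambda>x. c * itO d th n g x)"
    by (simp only: itO.simps e)
  then show ?case by (simp add: OE_cmult)
qed

lemma itO_sum: "finite A \<Longrightarrow> itO d th n (\<lambda>x. \<Sum>k\<in>A. g k x) L = (\<Sum>k\<in>A. itO d th n (g k) L)"
proof (induction A rule: finite_induct)
  case empty
  have "itO d th n (\<lambda>x. 0 * 0) L = 0 * itO d th n (\<lambda>x. 0) L" by (rule itO_cmult)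
  then show ?case by simp
next
  case (insert a A)
  have "itO d th n (\<lambda>x. \<Sum>k\<in>insert a A. g k x) L = itO d th n (\<lambda>x. g a x + (\<Sum>k\<in>A. g k x)) L"
    using insert by simp
  also have "\<dots> = itO d th n (g a) L + itO d th n (\<lambda>x. \<Sum>k\<in>A. g k x) L" by (rule itO_add)
  finally show ?case using insert by simp
qed

lemma itO_le_const:
  assumes "0 \<le> c" "\<And>L. g L \<le> c"
  shows "itO d th n g L \<le> c"
proof (induction n arbitrary: L)
  case 0 then show ?case using assms by simp
next
  case (Suc n) then show ?case using assms(1) by (simp, intro OE_le_const) auto
qed

lemma itO_le_const_inv:
  assumes "0 \<le> c" "\<And>L. P L \<Longrightarrow> g L \<le> c" "\<And>L j. P L \<Longrightarrow> j \<in> SS d th L \<Longrightarrow> P (up L j)" "P L"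
  shows "itO d th n g L \<le> c"
  using assms(4)
proof (induction n arbitrary: L)
  case 0 then show ?case using assms by simp
next
  case (Suc n) then show ?case using assms(1,3) by (simp, intro OE_le_const) auto
qed

lemma itO_nonneg:
  assumes "\<And>L. 0 \<le> g L"
  shows "0 \<le> itO d th n g L"
proof (induction n arbitrary: L)
  case 0 then show ?case using assms by simp
next
  case (Suc n) then show ?case by (simp, intro OE_nonneg) auto
qed

context
  fixes mu :: real
  assumes mu0: "0 < mu" and mu1: "mu \<le> 1"
begin

lemma TEit_mono:
  assumes "\<And>L. g L \<le> h L"
  shows "TEit d th mu i n g L \<le> TEit d th mu i n h L"
proof (induction n arbitrary: L)
  case 0 then show ?case using assms by simp
next
  case (Suc n) then show ?case using mu0 mu1 by (simp, intro TE_mono) auto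
qed

lemma TEit_nonneg:
  assumes "\<And>L. 0 \<le> g L"
  shows "0 \<le> TEit d th mu i n g L"
proof (induction n arbitrary: L)
  case 0 then show ?case using assms by simp
next
  case (Suc n) then show ?case using mu0 mu1 by (simp, intro TE_nonneg) auto
qed

lemma TEit_le_const:
  assumes "0 \<le> c" "\<And>L. g L \<le> c"
  shows "TEit d th mu i n g L \<le> c"
proof (induction n arbitrary: L)
  case 0 then show ?case using assms by simp
next
  case (Suc n) then show ?case using assms(1) mu0 mu1 by (simp, intro TE_le_const) auto
qed

lemma TEit_add: "TEit d th mu i n (\<lambda>x. g x + h x) L = TEit d th mu i n g L + TEit d th mu i n h L"
proof (induction n arbitrary: L)
  case 0 then show ?case by simp
next
  case (Suc n)
  have e: "TEit d th mu i n (\<lambda>x. g x + h x) = (\<lambda>x. TEit d th mu i n g x + TEit d th mu i n h x)"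
    by (rule ext) (rule Suc.IH)
  have "TEit d th mu i (Suc n) (\<lambda>x. g x + h x) L = TE d th mu i L (\<lambda>x. TEit d th mu i n g x + TEit d th mu i n h x)"
    by (simp only: TEit.simps e)
  then show ?case by (simp add: TE_add)
qed

lemma TEit_cmult: "TEit d th mu i n (\<lambda>x. c * g x) L = c * TEit d th mu i n g L"
proof (induction n arbitrary: L)
  case 0 then show ?case by simp
next
  case (Suc n)
  have e: "TEit d th mu i n (\<lambda>x. c * g x) = (\<lambda>x. c * TEit d th mu i n g x)"
    by (rule ext) (rule Suc.IH)
  have "TEit d th mu i (Suc n) (\<lambda>x. c * g x) L = TE d th mu i L (\<lambda>x. c * TEit d th mu i n g x)"
    by (simp only: TEit.simps e)
  then show ?case by (simp add: TE_cmult)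
qed

lemma TEit_sum: "finite A \<Longrightarrow> TEit d th mu i n (\<lambda>x. \<Sum>k\<in>A. g k x) L = (\<Sum>k\<in>A. TEit d th mu i n (g k) L)"
proof (induction A rule: finite_induct)
  case empty
  have "TEit d th mu i n (\<lambda>x. 0 * 0) L = 0 * TEit d th mu i n (\<lambda>x. 0) L" by (rule TEit_cmult)
  then show ?case by simp
next
  case (insert a A)
  have "TEit d th mu i n (\<lambda>x. \<Sum>k\<in>insert a A. g k x) L = TEit d th mu i n (\<lambda>x. g a x + (\<Sum>k\<in>A. g k x)) L"
    using insert by simp
  also have "\<dots> = TEit d th mu i n (g a) L + TEit d th mu i n (\<lambda>x. \<Sum>k\<in>A. g k x) L" by (rule TEit_add)
  finally show ?case using insert by simp
qed

lemma TEit_const: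
  assumes "n \<le> (\<Sum>k<d. th - L k)"
  shows "TEit d th mu i n (\<lambda>_. c) L = c"
  using assms
proof (induction n arbitrary: L)
  case 0 then show ?case by simp
next
  case (Suc n)
  have ne: "SS d th L \<noteq> {}" using Suc.prems by (intro cap_pos_SS) linarith
  have "TEit d th mu i (Suc n) (\<lambda>_. c) L = TE d th mu i L (TEit d th mu i n (\<lambda>_. c))" by simp
  also have "\<dots> = TE d th mu i L (\<lambda>_. c)"
  proof (rule TE_cong)
    fix j assume j: "j \<in> SS d th L"
    have "n \<le> (\<Sum>k<d. th - up L j k)" using cap_up[OF j] Suc.prems by linarith
    then show "TEit d th mu i n (\<lambda>_. c) (up L j) = c" by (rule Suc.IH)
  qed
  also have "\<dots> = c" by (rule TE_const[OF mu0 mu1 ne])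
  finally show ?case .
qed

end


lemma num1:
  fixes s d q :: real
  assumes "1 \<le> s" "s \<le> d" "0 \<le> q" "q \<le> 1"
  shows "1 - q / s \<le> (1 - q / d) * (1 - q * (d - s) / d^2)"
proof -
  have d0: "d > 0" using assms by linarith
  have a: "(2 * d - s) / d^2 \<le> 1 / s"
  proof -
    have "d^2 - (2 * d - s) * s = (d - s)^2" by (simp add: power2_eq_square algebra_simps)
    then have "(2 * d - s) * s \<le> d^2" using zero_le_power2[of "d - s"] by linarith
    then show ?thesis using d0 assms(1) by (simp add: field_simps)
  qed
  have "(1 - q / d) * (1 - q * (d - s) / d^2) = 1 - q * ((2 * d - s) / d^2) + q * (q * (d - s) / d^3)"
    using d0 by (simp add: field_simps power2_eq_square power3_eq_cube)
  moreover have "q * (q * (d - s) / d^3) \<ge> 0" using assms d0 by simp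
  moreover have "q * ((2 * d - s) / d^2) \<le> q * (1 / s)" using a assms by (intro mult_left_mono) auto
  ultimately show ?thesis by simp
qed

lemma num2:
  fixes x y :: real
  assumes "0 \<le> x" "0 \<le> y" "y \<le> 1"
  shows "(1 - x) * (1 - y / 2) \<le> 1 - (x + y) / 2"
proof -
  have "x * y \<le> x * 1" using assms by (intro mult_left_mono) auto
  moreover have "(1 - x) * (1 - y / 2) = 1 - (x + y) / 2 - x / 2 + x * y / 2" by (simp add: field_simps)
  ultimately show ?thesis by linarith
qed

lemma num3:
  fixes s c S :: real
  assumes "0 < s" "s - c \<noteq> 0"
  shows "(1 - c / s) * (S / (s - c)) = S / s"
  using assms by (simp add: field_simps)

lemma fac_nonneg:
  assumes "0 < mu" "mu \<le> 1"
  shows "0 \<le> 1 - (1 - mu) / real (card A)"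
proof (cases "card A = 0")
  case True then show ?thesis by simp
next
  case False
  then have "real (card A) \<ge> 1" by simp
  then have "(1 - mu) / real (card A) \<le> (1 - mu) / 1" using assms by (intro divide_left_mono) auto
  then have "(1 - mu) / real (card A) \<le> 1 - mu" by simp
  then show ?thesis using assms by linarith
qed

context
  fixes mu :: real
  assumes mu0: "0 < mu" and mu1: "mu \<le> 1"
begin

lemma VV_nonneg: "0 \<le> VV d th mu i n L"
proof (induction n arbitrary: L)
  case 0 then show ?case by simp
next
  case (Suc n)
  have "0 \<le> TE d th mu i L (VV d th mu i n)" using Suc mu0 mu1 by (intro TE_nonneg) auto
  then show ?case by (simp only: VV.simps, intro mult_nonneg_nonneg fac_nonneg[OF mu0 mu1])
qed

lemma link_step_eq:
  assumes iS: "i \<in> SS d th L" and le: "L0 i \<le> L i"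
  shows "OE d th L (\<lambda>L'. mu ^ (L' i - L0 i) * VV d th mu i n L') = mu ^ (L i - L0 i) * VV d th mu i (Suc n) L"
proof -
  define s where "s = real (card (SS d th L))"
  have s1: "s \<ge> 1" using card_SS_ge1[OF iS] s_def by simp
  have pw: "mu ^ (up L j i - L0 i) = mu ^ (L i - L0 i) * (if j = i then mu else 1)" for j
  proof (cases "j = i")
    case True
    then have "up L j i - L0 i = Suc (L i - L0 i)" using le by simp
    then show ?thesis using True by simp
  next
    case False then show ?thesis by simp
  qed
  have "OE d th L (\<lambda>L'. mu ^ (L' i - L0 i) * VV d th mu i n L') =
     (\<Sum>j\<in>SS d th L. mu ^ (L i - L0 i) * ((if j = i then mu else 1) * VV d th mu i n (up L j))) / s"
    unfolding OE_def s_def by (intro arg_cong2[where f="(/)"] sum.cong refl) (simp add: pw)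
  also have "\<dots> = mu ^ (L i - L0 i) * ((\<Sum>j\<in>SS d th L. (if j = i then mu else 1) * VV d th mu i n (up L j)) / s)"
    by (simp add: sum_distrib_left)
  finally have e1: "OE d th L (\<lambda>L'. mu ^ (L' i - L0 i) * VV d th mu i n L') =
      mu ^ (L i - L0 i) * ((\<Sum>j\<in>SS d th L. (if j = i then mu else 1) * VV d th mu i n (up L j)) / s)" .
  have "TE d th mu i L (VV d th mu i n) = (\<Sum>j\<in>SS d th L. (if j = i then mu else 1) / (s - (1 - mu)) * VV d th mu i n (up L j))"
    unfolding TE_def s_def by (intro sum.cong refl) (simp add: wt_in[OF iS])
  also have "\<dots> = (\<Sum>j\<in>SS d th L. (if j = i then mu else 1) * VV d th mu i n (up L j)) / (s - (1 - mu))"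
    by (simp add: sum_divide_distrib)
  finally have e2: "TE d th mu i L (VV d th mu i n) = (\<Sum>j\<in>SS d th L. (if j = i then mu else 1) * VV d th mu i n (up L j)) / (s - (1 - mu))" .
  have pos: "s - (1 - mu) > 0" using s1 mu0 by linarith
  have "VV d th mu i (Suc n) L = (1 - (1 - mu) / s) * TE d th mu i L (VV d th mu i n)"
    by (simp add: s_def)
  also have "\<dots> = (\<Sum>j\<in>SS d th L. (if j = i then mu else 1) * VV d th mu i n (up L j)) / s"
    unfolding e2 by (rule num3) (use pos s1 in auto)
  finally show ?thesis using e1 by simp
qed

lemma link:
  assumes "i < d"
  shows "L0 i \<le> L i \<Longrightarrow> L i \<le> th \<Longrightarrow>
    itO d th n (\<lambda>L'. mu ^ (L' i - L0 i)) L \<le> mu ^ (L i - L0 i) * VV d th mu i n L + mu ^ (th - L0 i)"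
proof (induction n arbitrary: L)
  case 0 then show ?case using mu0 by simp
next
  case (Suc n)
  show ?case
  proof (cases "i \<in> SS d th L")
    case True
    have ne: "SS d th L \<noteq> {}" using True by blast
    have "itO d th (Suc n) (\<lambda>L'. mu ^ (L' i - L0 i)) L = OE d th L (itO d th n (\<lambda>L'. mu ^ (L' i - L0 i)))"
      by simp
    also have "\<dots> \<le> OE d th L (\<lambda>L'. mu ^ (L' i - L0 i) * VV d th mu i n L' + mu ^ (th - L0 i))"
    proof (rule OE_mono)
      fix j assume j: "j \<in> SS d th L"
      have "L i < th" using True SS_iff by blast
      then have "L0 i \<le> up L j i" "up L j i \<le> th" using Suc.prems by (cases "j = i"; simp)+
      then show "itO d th n (\<lambda>L'. mu ^ (L' i - L0 i)) (up L j) \<le> mu ^ (up L j i - L0 i) * VV d th mu i n (up L j) + mu ^ (th - L0 i)"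
        by (rule Suc.IH)
    qed
    also have "\<dots> = OE d th L (\<lambda>L'. mu ^ (L' i - L0 i) * VV d th mu i n L') + mu ^ (th - L0 i)"
      by (simp add: OE_add OE_const[OF ne])
    also have "\<dots> = mu ^ (L i - L0 i) * VV d th mu i (Suc n) L + mu ^ (th - L0 i)"
      using link_step_eq[where ?L0.0=L0 and L=L and n=n, OF True Suc.prems(1)] by simp
    finally show ?thesis .
  next
    case False
    then have Li: "th \<le> L i" using assms SS_iff by (meson not_le)
    have "itO d th (Suc n) (\<lambda>L'. mu ^ (L' i - L0 i)) L \<le> mu ^ (th - L0 i)"
    proof (rule itO_le_const_inv[where P="\<lambda>L'. th \<le> L' i"])
      show "0 \<le> mu ^ (th - L0 i)" using mu0 by simp
      show "th \<le> L i" by (rule Li)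
      fix L' assume "th \<le> L' i"
      then show "mu ^ (L' i - L0 i) \<le> mu ^ (th - L0 i)" using mu0 mu1 by (intro power_decreasing) auto
    next
      fix L' j assume a: "th \<le> L' i" "j \<in> SS d th L'"
      then have "j \<noteq> i" using SS_iff by (metis not_le)
      then show "th \<le> up L' j i" using a by simp
    qed
    moreover have "0 \<le> mu ^ (L i - L0 i) * VV d th mu i (Suc n) L"
      using mu0 by (intro mult_nonneg_nonneg VV_nonneg) simp
    ultimately show ?thesis by linarith
  qed
qed

lemma xx_bounds:
  assumes "1 \<le> d"
  shows "0 \<le> xx d th mu L" "xx d th mu L \<le> (1 - mu) / real d"
proof -
  have c: "real (card (SS d th L)) \<le> real d" using card_SS_le by simp
  show "0 \<le> xx d th mu L" unfolding xx_def using c mu1 by simp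
  have "(1 - mu) * (real d - real (card (SS d th L))) \<le> (1 - mu) * real d"
    using mu1 by (intro mult_left_mono) auto
  then have "xx d th mu L \<le> (1 - mu) * real d / (real d)^2" unfolding xx_def
    by (intro divide_right_mono) auto
  also have "\<dots> = (1 - mu) / real d" using assms by (simp add: power2_eq_square)
  finally show "xx d th mu L \<le> (1 - mu) / real d" .
qed

lemma XX_nonneg: "1 \<le> d \<Longrightarrow> 0 \<le> XX d th mu i n L"
proof (induction n arbitrary: L)
  case 0 then show ?case by simp
next
  case (Suc n)
  have "0 \<le> TE d th mu i L (XX d th mu i n)" using Suc mu0 mu1 by (intro TE_nonneg) auto
  then show ?case using xx_bounds(1)[OF Suc.prems] by simp
qed

lemma XX_le: "1 \<le> d \<Longrightarrow> XX d th mu i n L \<le> real n * (1 - mu) / real d"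
proof (induction n arbitrary: L)
  case 0 then show ?case by simp
next
  case (Suc n)
  have "TE d th mu i L (XX d th mu i n) \<le> real n * (1 - mu) / real d"
    using Suc mu0 mu1 by (intro TE_le_const) auto
  moreover have "real (Suc n) * (1 - mu) / real d = (1 - mu) / real d + real n * (1 - mu) / real d"
  proof -
    have "real (Suc n) * (1 - mu) = (1 - mu) + real n * (1 - mu)" by (simp add: algebra_simps)
    then show ?thesis by (simp only: add_divide_distrib)
  qed
  ultimately show ?case using xx_bounds(2)[OF Suc.prems, of th L] by simp
qed

lemma XX_sum: "XX d th mu i n L = (\<Sum>t<n. TEit d th mu i t (xx d th mu) L)"
proof (induction n arbitrary: L)
  case 0 then show ?case by simp
next
  case (Suc n)
  have e: "XX d th mu i n = (\<lambda>L'. \<Sum>t<n. TEit d th mu i t (xx d th mu) L')"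
    by (rule ext) (rule Suc.IH)
  have "XX d th mu i (Suc n) L = xx d th mu L + TE d th mu i L (\<lambda>L'. \<Sum>t<n. TEit d th mu i t (xx d th mu) L')"
    by (simp only: XX.simps e)
  also have "\<dots> = xx d th mu L + (\<Sum>t<n. TEit d th mu i (Suc t) (xx d th mu) L)"
    by (simp add: TE_sum)
  also have "\<dots> = (\<Sum>t<Suc n. TEit d th mu i t (xx d th mu) L)"
    by (simp only: sum.lessThan_Suc_shift TEit.simps)
  finally show ?case .
qed

lemma VV_bound:
  assumes d1: "1 \<le> d"
  shows "n \<le> d \<Longrightarrow> n \<le> (\<Sum>k<d. th - L k) \<Longrightarrow>
    VV d th mu i n L \<le> (1 - (1 - mu) / real d) ^ n * (1 - XX d th mu i n L / 2)"
proof (induction n arbitrary: L)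
  case 0 then show ?case by simp
next
  case (Suc n)
  define q where "q = 1 - mu"
  define A where "A = (1 - q / real d) ^ n"
  have q0: "0 \<le> q" "q \<le> 1" using mu0 mu1 q_def by auto
  have ne: "SS d th L \<noteq> {}" using Suc.prems by (intro cap_pos_SS) linarith
  then obtain j0 where j0: "j0 \<in> SS d th L" by blast
  define s where "s = real (card (SS d th L))"
  have s1: "1 \<le> s" using card_SS_ge1[OF j0] s_def by simp
  have sd: "s \<le> real d" using card_SS_le s_def by simp
  have A0: "0 \<le> A" unfolding A_def using q0 d1 by (intro zero_le_power) (simp add: field_simps)
  have "TE d th mu i L (VV d th mu i n) \<le> TE d th mu i L (\<lambda>L'. A * (1 - XX d th mu i n L' / 2))"
  proof (rule TE_mono[OF mu0 mu1])
    fix j assume j: "j \<in> SS d th L"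
    have "n \<le> (\<Sum>k<d. th - up L j k)" using cap_up[OF j] Suc.prems by linarith
    moreover have "n \<le> d" using Suc.prems by simp
    ultimately show "VV d th mu i n (up L j) \<le> A * (1 - XX d th mu i n (up L j) / 2)"
      using Suc.IH unfolding A_def q_def by blast
  qed
  also have "TE d th mu i L (\<lambda>L'. A * (1 - XX d th mu i n L' / 2)) = A + (- (A / 2)) * TE d th mu i L (XX d th mu i n)"
  proof -
    have e: "(\<lambda>L'. A * (1 - XX d th mu i n L' / 2)) = (\<lambda>L'. A + (- (A / 2)) * XX d th mu i n L')"
      by (rule ext) (simp add: algebra_simps)
    have "TE d th mu i L (\<lambda>L'. A + (- (A / 2)) * XX d th mu i n L') =
        TE d th mu i L (\<lambda>_. A) + TE d th mu i L (\<lambda>L'. (- (A / 2)) * XX d th mu i n L')"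
      by (rule TE_add)
    also have "\<dots> = A + (- (A / 2)) * TE d th mu i L (XX d th mu i n)"
      by (simp only: TE_const[OF mu0 mu1 ne] TE_cmult)
    finally show ?thesis by (simp only: e)
  qed
  finally have t1: "TE d th mu i L (VV d th mu i n) \<le> A * (1 - TE d th mu i L (XX d th mu i n) / 2)"
    by (simp add: algebra_simps)
  define Y where "Y = TE d th mu i L (XX d th mu i n)"
  have Y0: "0 \<le> Y" unfolding Y_def using XX_nonneg[OF d1] mu0 mu1 by (intro TE_nonneg) auto
  have Y1: "Y \<le> 1"
  proof -
    have "Y \<le> real n * (1 - mu) / real d" unfolding Y_def using XX_le[OF d1] mu0 mu1 q0 q_def
      by (intro TE_le_const) auto
    also have "\<dots> \<le> 1"
    proof -
      have "real n \<le> real d" using Suc.prems by simp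
      then have "real n * (1 - mu) \<le> real d * 1" using mu0 mu1 by (intro mult_mono) auto
      then show ?thesis using d1 by (simp add: field_simps)
    qed
    finally show ?thesis .
  qed
  define x where "x = xx d th mu L"
  have x0: "0 \<le> x" unfolding x_def by (rule xx_bounds(1)[OF d1])
  have xdef: "x = q * (real d - s) / (real d)^2" unfolding x_def xx_def q_def s_def by simp
  have f0: "0 \<le> 1 - q / s" using fac_nonneg[OF mu0 mu1] unfolding q_def s_def by simp
  have f1: "1 - q / s \<le> (1 - q / real d) * (1 - x)"
    unfolding xdef by (rule num1[OF s1 sd q0])
  have "VV d th mu i (Suc n) L = (1 - q / s) * TE d th mu i L (VV d th mu i n)"
    by (simp add: q_def s_def)
  also have "\<dots> \<le> (1 - q / s) * (A * (1 - Y / 2))"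
    using t1 f0 unfolding Y_def by (intro mult_left_mono) auto
  also have "\<dots> \<le> ((1 - q / real d) * (1 - x)) * (A * (1 - Y / 2))"
    using f1 A0 Y1 by (intro mult_right_mono) auto
  also have "\<dots> = (1 - q / real d) * A * ((1 - x) * (1 - Y / 2))" by (simp only: ac_simps)
  also have "\<dots> \<le> (1 - q / real d) * A * (1 - (x + Y) / 2)"
  proof (rule mult_left_mono)
    show "(1 - x) * (1 - Y / 2) \<le> 1 - (x + Y) / 2" by (rule num2[OF x0 Y0 Y1])
    show "0 \<le> (1 - q / real d) * A" using A0 q0 d1 by (intro mult_nonneg_nonneg) (simp_all add: field_simps)
  qed
  also have "\<dots> = (1 - (1 - mu) / real d) ^ Suc n * (1 - XX d th mu i (Suc n) L / 2)"
    unfolding A_def q_def x_def Y_def by simp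
  finally show ?case .
qed

end


definition nf :: "nat \<Rightarrow> nat \<Rightarrow> (nat \<Rightarrow> nat) \<Rightarrow> real" where
  "nf j th L = (if L j < th then 1 else 0)"

definition full :: "nat \<Rightarrow> nat \<Rightarrow> (nat \<Rightarrow> nat) \<Rightarrow> real" where
  "full j th L = 1 - nf j th L"

lemma sum_if_split:
  fixes w :: "nat \<Rightarrow> real"
  assumes "finite A" "j \<in> A"
  shows "(\<Sum>k\<in>A. w k * (if k = j then a else b)) = b * (\<Sum>k\<in>A. w k) + (a - b) * w j"
proof -
  have "(\<Sum>k\<in>A. w k * (if k = j then a else b)) = (\<Sum>k\<in>A. b * w k + (if k = j then (a - b) * w k else 0))"
    by (intro sum.cong) (auto simp: algebra_simps)
  also have "\<dots> = b * (\<Sum>k\<in>A. w k) + (\<Sum>k\<in>A. (if k = j then (a - b) * w k else 0))"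
    by (simp add: sum.distrib sum_distrib_left)
  also have "(\<Sum>k\<in>A. (if k = j then (a - b) * w k else 0)) = (a - b) * w j"
    using assms by (simp add: sum.delta)
  finally show ?thesis .
qed

definition BB :: "real \<Rightarrow> nat \<Rightarrow> real" where
  "BB p n = (1 - p) ^ n + real n * p * (1 - p) ^ (n - 1)"

lemma BB_step: "(1 - p) * BB p n + p * (1 - p) ^ n = BB p (Suc n)"
proof (cases n)
  case 0 then show ?thesis by (simp add: BB_def algebra_simps)
next
  case (Suc m) then show ?thesis by (simp add: BB_def algebra_simps)
qed

lemma BB_ge: "0 \<le> p \<Longrightarrow> p \<le> 1 \<Longrightarrow> (1 - p) ^ n \<le> BB p n"
  unfolding BB_def by simp

context
  fixes mu :: real
  assumes mu0: "0 < mu" and mu1: "mu \<le> 1"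
begin

lemma D0: "th \<le> L j \<Longrightarrow> TEit d th mu i n (nf j th) L = 0"
proof (induction n arbitrary: L)
  case 0 then show ?case by (simp add: nf_def)
next
  case (Suc n)
  have "TE d th mu i L (TEit d th mu i n (nf j th)) = TE d th mu i L (\<lambda>_. 0)"
  proof (rule TE_cong)
    fix k assume k: "k \<in> SS d th L"
    then have "k \<noteq> j" using Suc.prems SS_iff by (metis not_le)
    then have "th \<le> up L k j" using Suc.prems by simp
    then show "TEit d th mu i n (nf j th) (up L k) = 0" by (rule Suc.IH)
  qed
  then show ?case by (simp add: TE_zero)
qed

lemma TE_expand: "TE d th mu i L g = (\<Sum>k\<in>SS d th L. wt d th mu i L k * g (up L k))"
  by (simp add: TE_def)

lemma D1:
  assumes "j \<noteq> i" "j < d"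
  shows "Suc (L j) = th \<Longrightarrow> TEit d th mu i n (nf j th) L \<le> (1 - 1 / real d) ^ n"
proof (induction n arbitrary: L)
  case 0 then show ?case by (simp add: nf_def)
next
  case (Suc n)
  define p where "p = 1 / real d"
  have d1: "real d \<ge> 1" using assms by simp
  have p0: "0 \<le> p" "p \<le> 1" using d1 unfolding p_def by auto
  have jS: "j \<in> SS d th L" using Suc.prems assms SS_iff by auto
  have "TEit d th mu i (Suc n) (nf j th) L = (\<Sum>k\<in>SS d th L. wt d th mu i L k * TEit d th mu i n (nf j th) (up L k))"
    by (simp add: TE_expand)
  also have "\<dots> \<le> (\<Sum>k\<in>SS d th L. wt d th mu i L k * (if k = j then 0 else (1 - p) ^ n))"
  proof (rule sum_mono, rule mult_left_mono)
    fix k assume k: "k \<in> SS d th L"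
    show "TEit d th mu i n (nf j th) (up L k) \<le> (if k = j then 0 else (1 - p) ^ n)"
    proof (cases "k = j")
      case True
      then have "th \<le> up L k j" using Suc.prems by simp
      then show ?thesis using True D0 by simp
    next
      case False
      then have "Suc (up L k j) = th" using Suc.prems by simp
      then show ?thesis using False Suc.IH unfolding p_def by simp
    qed
    show "0 \<le> wt d th mu i L k" by (rule wt_nonneg[OF mu0 mu1])
  qed
  also have "\<dots> = (1 - p) ^ n * (\<Sum>k\<in>SS d th L. wt d th mu i L k) + (0 - (1 - p) ^ n) * wt d th mu i L j"
    by (rule sum_if_split[OF SS_finite jS])
  also have "\<dots> = (1 - p) ^ n * (1 - wt d th mu i L j)"
    using wt_sum[OF mu0 mu1 SS_nonempty[OF jS]] by (simp add: algebra_simps)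
  also have "\<dots> \<le> (1 - p) ^ n * (1 - p)"
    using wt_lower[OF mu0 mu1 jS assms(1)] p0 unfolding p_def by (intro mult_left_mono) auto
  also have "\<dots> = (1 - 1 / real d) ^ Suc n" unfolding p_def by simp
  finally show ?case .
qed

lemma D2:
  assumes "j \<noteq> i" "j < d"
  shows "Suc (Suc (L j)) = th \<Longrightarrow> TEit d th mu i n (nf j th) L \<le> BB (1 / real d) n"
proof (induction n arbitrary: L)
  case 0 then show ?case by (simp add: nf_def BB_def)
next
  case (Suc n)
  define p where "p = 1 / real d"
  have d1: "real d \<ge> 1" using assms by simp
  have p0: "0 \<le> p" "p \<le> 1" using d1 unfolding p_def by auto
  have jS: "j \<in> SS d th L" using Suc.prems assms SS_iff by auto
  have "TEit d th mu i (Suc n) (nf j th) L = (\<Sum>k\<in>SS d th L. wt d th mu i L k * TEit d th mu i n (nf j th) (up L k))"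
    by (simp add: TE_expand)
  also have "\<dots> \<le> (\<Sum>k\<in>SS d th L. wt d th mu i L k * (if k = j then (1 - p) ^ n else BB p n))"
  proof (rule sum_mono, rule mult_left_mono)
    fix k assume k: "k \<in> SS d th L"
    show "TEit d th mu i n (nf j th) (up L k) \<le> (if k = j then (1 - p) ^ n else BB p n)"
    proof (cases "k = j")
      case True
      then have "Suc (up L k j) = th" using Suc.prems by simp
      then show ?thesis using True D1[OF assms] unfolding p_def by simp
    next
      case False
      then have "Suc (Suc (up L k j)) = th" using Suc.prems by simp
      then show ?thesis using False Suc.IH unfolding p_def by simp
    qed
    show "0 \<le> wt d th mu i L k" by (rule wt_nonneg[OF mu0 mu1])
  qed
  also have "\<dots> = BB p n * (\<Sum>k\<in>SS d th L. wt d th mu i L k) + ((1 - p) ^ n - BB p n) * wt d th mu i L j"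
    by (rule sum_if_split[OF SS_finite jS])
  also have "\<dots> = BB p n + ((1 - p) ^ n - BB p n) * wt d th mu i L j"
    using wt_sum[OF mu0 mu1 SS_nonempty[OF jS]] by simp
  also have "\<dots> \<le> BB p n + ((1 - p) ^ n - BB p n) * p"
  proof -
    have "((1 - p) ^ n - BB p n) * wt d th mu i L j \<le> ((1 - p) ^ n - BB p n) * p"
      using wt_lower[OF mu0 mu1 jS assms(1)] BB_ge[OF p0] unfolding p_def
      by (intro mult_left_mono_neg) auto
    then show ?thesis by simp
  qed
  also have "\<dots> = (1 - p) * BB p n + p * (1 - p) ^ n" by (simp add: algebra_simps)
  also have "\<dots> = BB p (Suc n)" by (rule BB_step)
  finally show ?case unfolding p_def .
qed

end


lemma SS_eq_filter: "SS d th L = {j\<in>{..<d}. L j < th}"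
  unfolding SS_def by auto

lemma card_SS_sum: "real (card (SS d th L)) = (\<Sum>j<d. nf j th L)"
proof -
  have "card (SS d th L) = (\<Sum>j\<in>{j\<in>{..<d}. L j < th}. (1::nat))"
    unfolding SS_eq_filter by simp
  also have "\<dots> = (\<Sum>j<d. if L j < th then 1 else 0)"
    by (subst sum.inter_filter) auto
  finally have "real (card (SS d th L)) = real (\<Sum>j<d. if L j < th then 1 else (0::nat))" by simp
  also have "\<dots> = (\<Sum>j<d. nf j th L)" unfolding of_nat_sum nf_def by (intro sum.cong) auto
  finally show ?thesis .
qed

lemma full_nonneg: "0 \<le> full j th L" unfolding full_def nf_def by simp

lemma xx_ge:
  assumes "0 < mu" "mu \<le> 1"
  shows "(1 - mu) / (real d)^2 * (\<Sum>j\<in>{..<d}-{i}. full j th L) \<le> xx d th mu L"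
proof -
  have "real d - real (card (SS d th L)) = (\<Sum>j<d. full j th L)"
    unfolding card_SS_sum full_def by (simp add: sum_subtractf)
  moreover have "(\<Sum>j\<in>{..<d}-{i}. full j th L) \<le> (\<Sum>j<d. full j th L)"
    by (rule sum_mono2) (auto simp: full_nonneg)
  ultimately have "(\<Sum>j\<in>{..<d}-{i}. full j th L) \<le> real d - real (card (SS d th L))" by simp
  then have "(1 - mu) * (\<Sum>j\<in>{..<d}-{i}. full j th L) \<le> (1 - mu) * (real d - real (card (SS d th L)))"
    using assms by (intro mult_left_mono) auto
  then show ?thesis unfolding xx_def by (simp add: divide_right_mono)
qed

lemma count_lemma:
  assumes "i < d" "\<forall>j<d. L0 j < th" "(\<Sum>j<d. th - L0 j) = 2 * d" "2 \<le> th - L0 i"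
  shows "real d - 1 \<le> (\<Sum>j\<in>{..<d}-{i}. 2 * (if th - L0 j = 1 then 1 else 0) + (if th - L0 j = 2 then 1 else (0::real)))"
proof -
  let ?J = "{..<d}-{i}"
  have each: "3 - real (th - L0 j) \<le> 2 * (if th - L0 j = 1 then 1 else 0) + (if th - L0 j = 2 then 1 else (0::real))"
    if "j \<in> ?J" for j
  proof -
    have "th - L0 j \<ge> 1" using that assms(2) by auto
    then show ?thesis by (cases "th - L0 j = 1"; cases "th - L0 j = 2") auto
  qed
  have tot: "(\<Sum>j<d. real (th - L0 j)) = 2 * real d"
    using arg_cong[OF assms(3), of real] by (simp add: of_nat_sum)
  have split: "(\<Sum>j<d. real (th - L0 j)) = real (th - L0 i) + (\<Sum>j\<in>?J. real (th - L0 j))"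
    using assms(1) by (simp add: sum.remove)
  have cJ: "card ?J = d - 1" using assms(1) by simp
  have "(\<Sum>j\<in>?J. 3 - real (th - L0 j)) = 3 * real (d - 1) - (\<Sum>j\<in>?J. real (th - L0 j))"
    by (simp add: sum_subtractf cJ)
  also have "\<dots> \<ge> real d - 1"
  proof -
    have "real (th - L0 i) \<ge> 2" using assms(4) by simp
    then have "(\<Sum>j\<in>?J. real (th - L0 j)) \<le> 2 * real d - 2" using tot split by linarith
    moreover have "real (d - 1) = real d - 1" using assms(1) by simp
    ultimately show ?thesis by linarith
  qed
  finally have "real d - 1 \<le> (\<Sum>j\<in>?J. 3 - real (th - L0 j))" .
  also have "\<dots> \<le> (\<Sum>j\<in>?J. 2 * (if th - L0 j = 1 then 1 else 0) + (if th - L0 j = 2 then 1 else (0::real)))"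
    by (rule sum_mono) (rule each)
  finally show ?thesis .
qed

lemma pow_inv_bound:
  fixes p :: real
  assumes "0 \<le> p" "p \<le> 1"
  shows "(1 - p) ^ n * (1 + p) ^ n \<le> 1"
proof -
  have "(1 - p) ^ n * (1 + p) ^ n = (1 - p^2) ^ n" by (simp add: power_mult_distrib[symmetric] power2_eq_square algebra_simps)
  also have "\<dots> \<le> 1" using assms by (intro power_le_one) (auto simp: power2_eq_square mult_le_one)
  finally show ?thesis .
qed

lemma pow_le_inv:
  fixes p E :: real
  assumes "0 \<le> p" "p \<le> 1" "0 < E" "E \<le> (1 + p) ^ n"
  shows "(1 - p) ^ n \<le> 1 / E"
proof -
  have "(1 - p) ^ n * E \<le> (1 - p) ^ n * (1 + p) ^ n"
    using assms by (intro mult_left_mono) auto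
  also have "\<dots> \<le> 1" by (rule pow_inv_bound[OF assms(1,2)])
  finally show ?thesis using assms(3) by (simp add: field_simps)
qed

lemma binom2:
  fixes p :: real
  assumes "0 \<le> p"
  shows "1 + real n * p + real n * (real n - 1) / 2 * p^2 \<le> (1 + p) ^ n"
proof (induction n)
  case 0 then show ?case by simp
next
  case (Suc n)
  have nn: "0 \<le> real n * (real n - 1)" by (cases n) auto
  define a where "a = real n * (real n - 1) / 2"
  have a0: "0 \<le> a * p^3" using nn assms unfolding a_def by simp
  have aS: "real (Suc n) * (real (Suc n) - 1) / 2 = a + real n"
    unfolding a_def by (simp add: field_simps)
  have eq: "(1 + real n * p + a * p^2) * (1 + p) = 1 + (real n + 1) * p + (a + real n) * p^2 + a * p^3"
    by (simp add: algebra_simps power2_eq_square power3_eq_cube)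
  have "1 + real (Suc n) * p + real (Suc n) * (real (Suc n) - 1) / 2 * p^2 \<le>
      (1 + real n * p + a * p^2) * (1 + p)"
  proof -
    have "real (Suc n) * p = (real n + 1) * p" by simp
    then show ?thesis unfolding aS eq using a0 by linarith
  qed
  then have "1 + real (Suc n) * p + real (Suc n) * (real (Suc n) - 1) / 2 * p^2 \<le>
      (1 + real n * p + real n * (real n - 1) / 2 * p^2) * (1 + p)" unfolding a_def .
  also have "\<dots> \<le> (1 + p) ^ n * (1 + p)" using Suc assms by (intro mult_right_mono) auto
  also have "\<dots> = (1 + p) ^ Suc n" by (simp add: mult.commute)
  finally show ?case .
qed

lemma num_A:
  assumes "16 \<le> d" "d \<le> 2 * t"
  shows "1 / 30 \<le> 1 - (1 - 1 / real d) ^ t"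
proof -
  define p where "p = 1 / real d"
  have p0: "0 \<le> p" "p \<le> 1" using assms unfolding p_def by auto
  have tp: "real t * p \<ge> 1 / 2" using assms unfolding p_def by (simp add: field_simps)
  have "(1 - p) ^ t \<le> 1 / (1 + real t * p)"
    using p0 Bernoulli_inequality[of p t] tp by (intro pow_le_inv) auto
  also have "\<dots> \<le> 1 / (1 + 1 / 2)" using tp by (intro divide_left_mono) auto
  finally show ?thesis unfolding p_def by simp
qed

lemma num_B:
  assumes "16 \<le> d" "d \<le> 2 * t" "t < d"
  shows "BB (1 / real d) t \<le> 59 / 60"
proof -
  define p where "p = 1 / real d"
  define r where "r = t - 1"
  have t1: "t = Suc r" using assms unfolding r_def by simp
  have D: "real d \<ge> 16" using assms by simp
  have p0: "0 \<le> p" "p \<le> 1" using assms unfolding p_def by auto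
  have BBr: "BB p t = (1 - p) ^ r * (1 + real r * p)"
    unfolding BB_def t1 by (simp add: algebra_simps)
  define R where "R = real r"
  have R1: "R \<ge> 7 * real d / 16" using assms D unfolding R_def t1 by simp
  have R2: "R - 1 \<ge> 3 * real d / 8" using assms D unfolding R_def t1 by simp
  have Rp: "R * p \<le> 1" using assms unfolding R_def p_def t1 by (simp add: field_simps)
  have RR: "R * (R - 1) \<ge> (7 * real d / 16) * (3 * real d / 8)"
    using R1 R2 D by (intro mult_mono) auto
  have pp: "p^2 * real d ^ 2 = 1" using D unfolding p_def by (simp add: power2_eq_square)
  have key: "R * (R - 1) * p^2 \<ge> 21 / 128"
  proof -
    have "R * (R - 1) * p^2 \<ge> (7 * real d / 16) * (3 * real d / 8) * p^2"
      using RR by (intro mult_right_mono) auto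
    also have "(7 * real d / 16) * (3 * real d / 8) * p^2 = 21 / 128 * (p^2 * real d ^ 2)"
      by (simp add: power2_eq_square)
    finally show ?thesis using pp by simp
  qed
  define E where "E = 1 + R * p + R * (R - 1) / 2 * p^2"
  have Eeq: "R * (R - 1) / 2 * p^2 = (R * (R - 1) * p^2) / 2" by simp
  have Rp0: "0 \<le> R * p" unfolding R_def using p0 by simp
  have E0: "0 < E" using key Rp0 unfolding E_def Eeq by linarith
  have "(1 - p) ^ r \<le> 1 / E"
    using p0 binom2[OF p0(1), of r] E0 unfolding E_def R_def by (intro pow_le_inv) auto
  then have "BB p t \<le> (1 / E) * (1 + R * p)"
    unfolding BBr R_def using p0 by (intro mult_right_mono) auto
  also have "\<dots> \<le> 59 / 60"
  proof -
    have gen: "60 * (1 + Y) \<le> 59 * (1 + Y + X / 2)" if "21/128 \<le> X" "Y \<le> 1" for X Y :: real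
      using that by (simp add: algebra_simps)
    have "60 * (1 + R * p) \<le> 59 * E" unfolding E_def Eeq using gen[OF key Rp] .
    then show ?thesis using E0 by (simp add: field_simps)
  qed
  finally show ?thesis unfolding p_def .
qed


lemma XX_lower:
  assumes mu0: "0 < mu" and mu1: "mu \<le> 1" and d16: "16 \<le> d" and id: "i < d"
    and L0: "\<forall>j<d. L0 j < th" and cap: "(\<Sum>j<d. th - L0 j) = 2 * d" and ki: "2 \<le> th - L0 i"
  shows "(1 - mu) / 240 \<le> XX d th mu i d L0"
proof -
  define J where "J = {..<d} - {i}"
  define q where "q = 1 - mu"
  have q0: "0 \<le> q" using mu1 q_def by simp
  have D: "real d \<ge> 16" using d16 by simp
  have fullTE: "TEit d th mu i t (full j th) L0 = 1 - TEit d th mu i t (nf j th) L0" if "t \<le> d" for t j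
  proof -
    have e: "full j th = (\<lambda>x. 1 + (-1) * nf j th x)" by (rule ext) (simp add: full_def)
    have "TEit d th mu i t (\<lambda>x. 1 + (-1) * nf j th x) L0 = TEit d th mu i t (\<lambda>_. 1) L0 + TEit d th mu i t (\<lambda>x. (-1) * nf j th x) L0"
      by (rule TEit_add[OF mu0 mu1])
    also have "\<dots> = 1 + (-1) * TEit d th mu i t (nf j th) L0"
    proof -
      have "TEit d th mu i t (\<lambda>_. 1) L0 = 1" using that cap by (intro TEit_const[OF mu0 mu1]) simp
      moreover have "TEit d th mu i t (\<lambda>x. (-1) * nf j th x) L0 = (-1) * TEit d th mu i t (nf j th) L0"
        by (rule TEit_cmult[OF mu0 mu1])
      ultimately show ?thesis by simp
    qed
    finally show ?thesis unfolding e by simp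
  qed
  have perj: "(1/60) * (2 * (if th - L0 j = 1 then 1 else 0) + (if th - L0 j = 2 then 1 else (0::real)))
      \<le> TEit d th mu i t (full j th) L0"
    if j: "j \<in> J" and t: "d \<le> 2 * t" "t < d" for j t
  proof -
    have jd: "j < d" "j \<noteq> i" using j unfolding J_def by auto
    have tle: "t \<le> d" using t by simp
    show ?thesis
    proof (cases "th - L0 j = 1")
      case True
      then have "Suc (L0 j) = th" using L0 jd by auto
      then have "TEit d th mu i t (nf j th) L0 \<le> (1 - 1 / real d) ^ t" by (rule D1[OF mu0 mu1 jd(2,1)])
      moreover have "1 / 30 \<le> 1 - (1 - 1 / real d) ^ t" by (rule num_A[OF d16 t(1)])
      ultimately show ?thesis using True fullTE[OF tle] by simp
    next
      case F1: False
      show ?thesis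
      proof (cases "th - L0 j = 2")
        case True
        then have "Suc (Suc (L0 j)) = th" using L0 jd by auto
        then have "TEit d th mu i t (nf j th) L0 \<le> BB (1 / real d) t" by (rule D2[OF mu0 mu1 jd(2,1)])
        moreover have "BB (1 / real d) t \<le> 59 / 60" by (rule num_B[OF d16 t])
        ultimately show ?thesis using True F1 fullTE[OF tle] by simp
      next
        case False
        have "0 \<le> TEit d th mu i t (full j th) L0" by (intro TEit_nonneg[OF mu0 mu1] full_nonneg)
        then show ?thesis using False F1 by simp
      qed
    qed
  qed
  have sumJ: "(real d - 1) / 60 \<le> (\<Sum>j\<in>J. TEit d th mu i t (full j th) L0)" if t: "d \<le> 2 * t" "t < d" for t
  proof -
    have "(real d - 1) / 60 \<le> (1/60) * (\<Sum>j\<in>J. 2 * (if th - L0 j = 1 then 1 else 0) + (if th - L0 j = 2 then 1 else (0::real)))"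
      using count_lemma[OF id L0 cap ki] unfolding J_def by simp
    also have "\<dots> = (\<Sum>j\<in>J. (1/60) * (2 * (if th - L0 j = 1 then 1 else 0) + (if th - L0 j = 2 then 1 else (0::real))))"
      by (simp add: sum_distrib_left)
    also have "\<dots> \<le> (\<Sum>j\<in>J. TEit d th mu i t (full j th) L0)"
      by (rule sum_mono) (rule perj[OF _ t])
    finally show ?thesis .
  qed
  have xxt: "q / (real d)^2 * (\<Sum>j\<in>J. TEit d th mu i t (full j th) L0) \<le> TEit d th mu i t (xx d th mu) L0" for t
  proof -
    have "TEit d th mu i t (\<lambda>L. q / (real d)^2 * (\<Sum>j\<in>J. full j th L)) L0 \<le> TEit d th mu i t (xx d th mu) L0"
      by (rule TEit_mono[OF mu0 mu1]) (use xx_ge[OF mu0 mu1] in \<open>simp add: q_def J_def\<close>)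
    moreover have "TEit d th mu i t (\<lambda>L. q / (real d)^2 * (\<Sum>j\<in>J. full j th L)) L0 = q / (real d)^2 * (\<Sum>j\<in>J. TEit d th mu i t (full j th) L0)"
    proof -
      have "TEit d th mu i t (\<lambda>L. q / (real d)^2 * (\<Sum>j\<in>J. full j th L)) L0 = q / (real d)^2 * TEit d th mu i t (\<lambda>L. \<Sum>j\<in>J. full j th L) L0"
        by (rule TEit_cmult[OF mu0 mu1])
      moreover have "TEit d th mu i t (\<lambda>L. \<Sum>j\<in>J. full j th L) L0 = (\<Sum>j\<in>J. TEit d th mu i t (full j th) L0)"
        by (rule TEit_sum[OF mu0 mu1]) (simp add: J_def)
      ultimately show ?thesis by simp
    qed
    ultimately show ?thesis by simp
  qed
  define c where "c = q / (real d)^2 * ((real d - 1) / 60)"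
  have c0: "0 \<le> c" unfolding c_def using q0 D by simp
  have tt: "(if d \<le> 2 * t then c else 0) \<le> TEit d th mu i t (xx d th mu) L0" if "t < d" for t
  proof (cases "d \<le> 2 * t")
    case True
    have "c \<le> q / (real d)^2 * (\<Sum>j\<in>J. TEit d th mu i t (full j th) L0)"
      unfolding c_def using sumJ[OF True that] q0 by (intro mult_left_mono) auto
    then show ?thesis using True xxt[of t] by simp
  next
    case False
    have "0 \<le> TEit d th mu i t (xx d th mu) L0"
      by (rule TEit_nonneg[OF mu0 mu1]) (use xx_bounds(1)[OF mu0 mu1] d16 in auto)
    then show ?thesis using False by simp
  qed
  have "(\<Sum>t\<in>{(d+1) div 2..<d}. (if d \<le> 2 * t then c else 0)) \<le> (\<Sum>t<d. (if d \<le> 2 * t then c else 0))"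
    by (rule sum_mono2) (use c0 in auto)
  also have "\<dots> \<le> (\<Sum>t<d. TEit d th mu i t (xx d th mu) L0)"
    by (rule sum_mono) (use tt in auto)
  also have "\<dots> = XX d th mu i d L0" by (rule XX_sum[OF mu0 mu1, symmetric])
  finally have S: "(\<Sum>t\<in>{(d+1) div 2..<d}. (if d \<le> 2 * t then c else 0)) \<le> XX d th mu i d L0" .
  have "(\<Sum>t\<in>{(d+1) div 2..<d}. (if d \<le> 2 * t then c else 0)) = (\<Sum>t\<in>{(d+1) div 2..<d}. c)"
    by (intro sum.cong) auto
  also have "\<dots> = real (d - (d+1) div 2) * c" by simp
  finally have S2: "real (d - (d+1) div 2) * c \<le> XX d th mu i d L0" using S by simp
  have cnt: "real (d - (d+1) div 2) \<ge> (real d - 1) / 2"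
  proof -
    have "2 * (d - (d+1) div 2) \<ge> d - 1" by linarith
    then have "real (2 * (d - (d+1) div 2)) \<ge> real (d - 1)" by linarith
    then show ?thesis using d16 by simp
  qed
  have "(real d - 1) / 2 * c \<le> real (d - (d+1) div 2) * c" using cnt c0 by (intro mult_right_mono) auto
  moreover have "q / 240 \<le> (real d - 1) / 2 * c"
  proof -
    have "(real d - 1) / 2 * c = q * ((real d - 1)^2 / (120 * (real d)^2))"
      unfolding c_def by (simp add: power2_eq_square field_simps)
    moreover have "1 / 240 \<le> (real d - 1)^2 / (120 * (real d)^2)"
    proof -
      have h1: "0 \<le> real d * (real d - 4)" using D by simp
      have h2: "2 * (real d - 1)^2 = (real d)^2 + (real d * (real d - 4) + 2)"
        by (simp add: power2_eq_square algebra_simps)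
      have "(real d)^2 \<le> 2 * (real d - 1)^2" using h1 h2 by linarith
      then show ?thesis using D by (simp add: field_simps)
    qed
    moreover have "q * (1 / 240) \<le> q * ((real d - 1)^2 / (120 * (real d)^2))"
      using calculation(2) q0 by (intro mult_left_mono) auto
    ultimately show ?thesis by simp
  qed
  ultimately show ?thesis using S2 unfolding q_def by linarith
qed


lemma VV_final:
  assumes mu0: "0 < mu" and mu1: "mu \<le> 1" and d16: "16 \<le> d" and id: "i < d"
    and L0: "\<forall>j<d. L0 j < th" and cap: "(\<Sum>j<d. th - L0 j) = 2 * d" and ki: "2 \<le> th - L0 i"
  shows "VV d th mu i d L0 \<le> (1 - (1 - mu) / real d) ^ d * (1 - (1 - mu) / 480)"
proof -
  have "VV d th mu i d L0 \<le> (1 - (1 - mu) / real d) ^ d * (1 - XX d th mu i d L0 / 2)"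
    using d16 cap by (intro VV_bound[OF mu0 mu1]) auto
  also have "\<dots> \<le> (1 - (1 - mu) / real d) ^ d * (1 - (1 - mu) / 480)"
  proof (rule mult_left_mono)
    show "1 - XX d th mu i d L0 / 2 \<le> 1 - (1 - mu) / 480"
      using XX_lower[OF assms] by simp
    have "0 \<le> 1 - (1 - mu) / real d" using mu0 mu1 d16 by (simp add: field_simps)
    then show "0 \<le> (1 - (1 - mu) / real d) ^ d" by simp
  qed
  finally show ?thesis .
qed

definition Psi :: "nat \<Rightarrow> real \<Rightarrow> nat \<Rightarrow> (nat \<Rightarrow> nat) \<Rightarrow> real" where
  "Psi d lam th L = (\<Sum>j<d. lam ^ (th - L j))"

lemma pow_split:
  fixes lam :: real
  assumes "lam > 0" "b \<le> a"
  shows "lam ^ (a - b) = lam ^ a * (1 / lam) ^ b"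
proof -
  have "lam ^ a = lam ^ (a - b) * lam ^ b" using assms(2) by (simp add: power_add[symmetric])
  then show ?thesis using assms(1) by (simp add: power_one_over field_simps)
qed

lemma phase:
  fixes lam :: real
  assumes lam1: "1 \<le> lam" and d16: "16 \<le> d"
    and L0: "\<forall>j<d. L0 j < th" and cap: "(\<Sum>j<d. th - L0 j) = 2 * d"
  shows "itO d th d (Psi d lam (Suc th)) L0 \<le>
     lam * ((1 - (1 - 1 / lam) / real d) ^ d * (1 - (1 - 1 / lam) / 480)) * Psi d lam th L0 + (lam + lam^2) * real d"
proof -
  define mu where "mu = 1 / lam"
  have mu0: "0 < mu" and mu1: "mu \<le> 1" using lam1 unfolding mu_def by auto
  define beta where "beta = (1 - (1 - mu) / real d) ^ d * (1 - (1 - mu) / 480)"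
  have beta0: "0 \<le> beta"
  proof -
    have "0 \<le> 1 - (1 - mu) / real d" using mu0 mu1 d16 by (simp add: field_simps)
    moreover have "0 \<le> 1 - (1 - mu) / 480" using mu0 mu1 by simp
    ultimately show ?thesis unfolding beta_def by simp
  qed
  define R where "R = (\<lambda>L. \<forall>j<d. L0 j \<le> L j \<and> L j \<le> th)"
  define G where "G = (\<lambda>L. \<Sum>j<d. lam ^ (Suc (th - L0 j)) * mu ^ (L j - L0 j))"
  have RL0: "R L0" unfolding R_def using L0 by (simp add: less_imp_le)
  have Rinv: "R (up L k)" if "R L" "k \<in> SS d th L" for L k
  proof -
    have "L k < th" using that(2) SS_iff by blast
    then show ?thesis using that(1) unfolding R_def by (auto simp: up_def)
  qed
  have PG: "Psi d lam (Suc th) L \<le> G L" if "R L" for L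
  proof -
    have "lam ^ (Suc th - L j) = lam ^ (Suc (th - L0 j)) * mu ^ (L j - L0 j)" if j: "j < d" for j
    proof -
      have a: "L0 j \<le> L j" "L j \<le> th" using \<open>R L\<close> j unfolding R_def by auto
      have "Suc th - L j = Suc (th - L0 j) - (L j - L0 j)" using a by simp
      moreover have "L j - L0 j \<le> Suc (th - L0 j)" using a by simp
      ultimately show ?thesis using pow_split[of lam "L j - L0 j" "Suc (th - L0 j)"] lam1 unfolding mu_def by simp
    qed
    then show ?thesis unfolding Psi_def G_def by (intro eq_refl sum.cong) auto
  qed
  have "itO d th d (Psi d lam (Suc th)) L0 \<le> itO d th d G L0"
    by (rule itO_mono_inv[where P=R]) (use Rinv PG RL0 in auto)
  also have "itO d th d G L0 = (\<Sum>j<d. lam ^ (Suc (th - L0 j)) * itO d th d (\<lambda>L. mu ^ (L j - L0 j)) L0)"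
    unfolding G_def by (simp add: itO_sum itO_cmult)
  also have "\<dots> \<le> (\<Sum>j<d. lam * beta * lam ^ (th - L0 j) + (lam + lam^2))"
  proof (rule sum_mono)
    fix j assume "j \<in> {..<d}"
    then have jd: "j < d" by simp
    have lp: "0 \<le> lam ^ (Suc (th - L0 j))" using lam1 by simp
    have lm: "lam ^ (Suc (th - L0 j)) * mu ^ (th - L0 j) = lam" 
    proof -
      have "lam ^ (th - L0 j) * mu ^ (th - L0 j) = (lam * mu) ^ (th - L0 j)" by (simp add: power_mult_distrib)
      also have "lam * mu = 1" unfolding mu_def using lam1 by simp
      finally show ?thesis by simp
    qed
    show "lam ^ (Suc (th - L0 j)) * itO d th d (\<lambda>L. mu ^ (L j - L0 j)) L0 \<le> lam * beta * lam ^ (th - L0 j) + (lam + lam^2)"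
    proof (cases "2 \<le> th - L0 j")
      case True
      have "itO d th d (\<lambda>L. mu ^ (L j - L0 j)) L0 \<le> mu ^ (L0 j - L0 j) * VV d th mu j d L0 + mu ^ (th - L0 j)"
        using L0 jd by (intro link[OF mu0 mu1 jd]) auto
      also have "\<dots> \<le> beta + mu ^ (th - L0 j)"
        using VV_final[OF mu0 mu1 d16 jd L0 cap True] unfolding beta_def by simp
      finally have "lam ^ (Suc (th - L0 j)) * itO d th d (\<lambda>L. mu ^ (L j - L0 j)) L0 \<le> lam ^ (Suc (th - L0 j)) * (beta + mu ^ (th - L0 j))"
        using lp by (intro mult_left_mono) auto
      also have "\<dots> = lam * beta * lam ^ (th - L0 j) + lam"
        using lm by (simp add: algebra_simps)
      also have "\<dots> \<le> lam * beta * lam ^ (th - L0 j) + (lam + lam^2)" using lam1 by simp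
      finally show ?thesis .
    next
      case False
      have "L0 j < th" using L0 jd by simp
      then have k1: "th - L0 j = 1" using False by linarith
      have "itO d th d (\<lambda>L. mu ^ (L j - L0 j)) L0 \<le> 1"
        using mu0 mu1 by (intro itO_le_const) (auto intro: power_le_one)
      then have "lam ^ (Suc (th - L0 j)) * itO d th d (\<lambda>L. mu ^ (L j - L0 j)) L0 \<le> lam ^ (Suc (th - L0 j)) * 1"
        using lp by (intro mult_left_mono) auto
      also have "\<dots> = lam^2" using k1 by (simp add: power2_eq_square)
      also have "\<dots> \<le> lam * beta * lam ^ (th - L0 j) + (lam + lam^2)"
        using lam1 beta0 by (simp add: mult_nonneg_nonneg)
      finally show ?thesis .
    qed
  qed
  also have "\<dots> = lam * beta * Psi d lam th L0 + (lam + lam^2) * real d"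
    unfolding Psi_def by (simp add: sum.distrib sum_distrib_left)
  finally show ?thesis unfolding beta_def mu_def .
qed


lemma bounded_integrable:
  fixes g :: "'a \<Rightarrow> real"
  assumes "\<And>x. 0 \<le> g x" "\<And>x. g x \<le> B"
  shows "integrable (measure_pmf p) g"
  by (rule measure_pmf.integrable_const_bound[where B=B]) (use assms in \<open>auto intro: order.trans\<close>)

lemma exp_bind:
  fixes g :: "'b \<Rightarrow> real"
  assumes g0: "\<And>x. 0 \<le> g x" and gB: "\<And>x. g x \<le> B"
  shows "measure_pmf.expectation (bind_pmf p q) g = measure_pmf.expectation p (\<lambda>y. measure_pmf.expectation (q y) g)"
proof -
  have B0: "0 \<le> B" using g0 gB order.trans by blast
  have i1: "integrable (measure_pmf (bind_pmf p q)) g" by (rule bounded_integrable[OF g0 gB])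
  have in0: "0 \<le> measure_pmf.expectation (q y) g" for y by (rule integral_nonneg_AE) (use g0 in auto)
  have inB: "measure_pmf.expectation (q y) g \<le> B" for y
  proof -
    have "measure_pmf.expectation (q y) g \<le> measure_pmf.expectation (q y) (\<lambda>_. B)"
      by (rule integral_mono) (use bounded_integrable[OF g0 gB] gB in auto)
    then show ?thesis by simp
  qed
  have i2: "integrable (measure_pmf p) (\<lambda>y. measure_pmf.expectation (q y) g)"
    by (rule bounded_integrable[OF in0 inB])
  have "ennreal (measure_pmf.expectation (bind_pmf p q) g) = (\<integral>\<^sup>+x. ennreal (g x) \<partial>measure_pmf (bind_pmf p q))"
    by (rule nn_integral_eq_integral[symmetric]) (use i1 g0 in auto)
  also have "\<dots> = (\<integral>\<^sup>+y. (\<integral>\<^sup>+x. ennreal (g x) \<partial>measure_pmf (q y)) \<partial>measure_pmf p)"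
    by (rule nn_integral_bind_pmf)
  also have "\<dots> = (\<integral>\<^sup>+y. ennreal (measure_pmf.expectation (q y) g) \<partial>measure_pmf p)"
    by (intro nn_integral_cong nn_integral_eq_integral) (use bounded_integrable[OF g0 gB] g0 in auto)
  also have "\<dots> = ennreal (measure_pmf.expectation p (\<lambda>y. measure_pmf.expectation (q y) g))"
    by (rule nn_integral_eq_integral) (use i2 in0 in auto)
  finally show ?thesis
    using in0 g0 by (subst (asm) ennreal_inj) (auto intro: integral_nonneg_AE)
qed

lemma thr_eq:
  assumes "0 < d"
  shows "ATD_threshold d t = (t + d - 1) div d + 1"
proof -
  define m where "m = (t + d - 1) div d"
  have dm: "m * d + (t + d - 1) mod d = t + d - 1" unfolding m_def by (rule div_mult_mod_eq)
  have md: "(t + d - 1) mod d < d" using assms by simp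
  have m1: "m * d \<le> t + d - 1" using dm by linarith
  have m2: "t + d - 1 < m * d + d" using dm md by linarith
  have a: "real t \<le> real m * real d"
  proof -
    have "t \<le> m * d" using m2 assms by linarith
    then show ?thesis by (metis of_nat_le_iff of_nat_mult)
  qed
  have b: "(real m - 1) * real d < real t"
  proof -
    have "real (m * d) \<le> real (t + d - 1)" using m1 by linarith
    moreover have "real (t + d - 1) = real t + real d - 1" using assms by (simp add: of_nat_diff)
    ultimately have "real m * real d \<le> real t + real d - 1" by simp
    then show ?thesis by (simp add: algebra_simps)
  qed
  have "\<lceil>real t / real d\<rceil> = int m"
  proof (rule ceiling_unique)
    show "real_of_int (int m) - 1 < real t / real d" using b assms by (simp add: field_simps)
    show "real t / real d \<le> real_of_int (int m)" using a assms by (simp add: field_simps)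
  qed
  then show ?thesis unfolding ATD_threshold_def m_def by simp
qed

lemma thr_phase:
  assumes "0 < d" "w < d"
  shows "ATD_threshold d (c * d + w + 1) = c + 2"
proof -
  have "(c * d + w + 1 + d - 1) div d = c + 1"
  proof -
    have "c * d + w + 1 + d - 1 = (c + 1) * d + w" by (simp add: algebra_simps)
    then show ?thesis using assms by simp
  qed
  then show ?thesis using thr_eq[OF assms(1)] by simp
qed

lemma thr_phase0:
  assumes "0 < d"
  shows "ATD_threshold d (c * d) = c + 1"
proof -
  have "(c * d + d - 1) div d = c"
  proof -
    have "c * d + d - 1 = (d - 1) + c * d" using assms by simp
    moreover have "((d - 1) + c * d) div d = c + (d - 1) div d" using assms by (intro div_mult_self1) simp
    ultimately show ?thesis using assms by simp
  qed
  then show ?thesis using thr_eq[OF assms] by simp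
qed

lemma thr_mono: "0 < d \<Longrightarrow> s \<le> t \<Longrightarrow> ATD_threshold d s \<le> ATD_threshold d t"
  by (simp add: thr_eq div_le_mono)


definition stepK :: "nat \<Rightarrow> nat \<Rightarrow> (nat \<Rightarrow> nat) \<Rightarrow> (nat \<Rightarrow> nat) pmf" where
  "stepK d t L = map_pmf (up L) (pmf_of_set (SS d (ATD_threshold d t) L))"

fun Dist :: "nat \<Rightarrow> nat \<Rightarrow> (nat \<Rightarrow> nat) pmf" where
  "Dist d 0 = return_pmf (\<lambda>_. 0)"
| "Dist d (Suc t) = (if t = 0 then return_pmf (\<lambda>_. 0) else Dist d t \<bind> stepK d t)"

definition Inv :: "nat \<Rightarrow> nat \<Rightarrow> (nat \<Rightarrow> nat) \<Rightarrow> bool" where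
  "Inv d t L \<longleftrightarrow> (\<Sum>j<d. L j) = t - 1 \<and> (\<forall>j<d. L j \<le> ATD_threshold d (t - 1))"

lemma thr_big:
  assumes "0 < d"
  shows "t + d \<le> d * ATD_threshold d t"
proof -
  define m where "m = (t + d - 1) div d"
  have dm: "m * d + (t + d - 1) mod d = t + d - 1" unfolding m_def by (rule div_mult_mod_eq)
  have md: "(t + d - 1) mod d < d" using assms by simp
  have "t \<le> m * d" using dm md assms by linarith
  then show ?thesis using thr_eq[OF assms, of t] unfolding m_def[symmetric] by (simp add: algebra_simps)
qed

lemma SS_ne_inv:
  assumes "0 < d" "1 \<le> t" "Inv d t L"
  shows "SS d (ATD_threshold d t) L \<noteq> {}"
proof
  assume e: "SS d (ATD_threshold d t) L = {}"
  have "\<forall>j<d. ATD_threshold d t \<le> L j"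
  proof (intro allI impI)
    fix j assume j: "j < d"
    have "j \<notin> SS d (ATD_threshold d t) L" using e by (rule equals0D)
    then show "ATD_threshold d t \<le> L j" using j unfolding SS_iff by simp
  qed
  then have "(\<Sum>j<d. ATD_threshold d t) \<le> (\<Sum>j<d. L j)" by (intro sum_mono) auto
  then have "d * ATD_threshold d t \<le> t - 1" using assms(3) unfolding Inv_def by simp
  then show False using thr_big[OF assms(1), of t] assms(2) by linarith
qed

lemma sum_up:
  assumes "j < d"
  shows "(\<Sum>k<d. up L j k) = Suc (\<Sum>k<d. L k)"
proof -
  have "(\<Sum>k<d. up L j k) = up L j j + (\<Sum>k\<in>{..<d}-{j}. up L j k)" using assms by (simp add: sum.remove)
  also have "(\<Sum>k\<in>{..<d}-{j}. up L j k) = (\<Sum>k\<in>{..<d}-{j}. L k)" by (intro sum.cong) auto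
  also have "(\<Sum>k<d. L k) = L j + (\<Sum>k\<in>{..<d}-{j}. L k)" using assms by (simp add: sum.remove)
  ultimately show ?thesis by simp
qed

lemma Dist_inv:
  assumes d0: "0 < d"
  shows "1 \<le> t \<Longrightarrow> L \<in> set_pmf (Dist d t) \<Longrightarrow> Inv d t L"
proof (induction t arbitrary: L)
  case 0 then show ?case by simp
next
  case (Suc t)
  show ?case
  proof (cases "t = 0")
    case True
    then show ?thesis using Suc.prems by (simp add: Inv_def)
  next
    case False
    then have t1: "1 \<le> t" by simp
    from Suc.prems(2) False obtain L' where L': "L' \<in> set_pmf (Dist d t)" and L: "L \<in> set_pmf (stepK d t L')"
      by auto
    have I: "Inv d t L'" using Suc.IH[OF t1 L'] .
    have ne: "SS d (ATD_threshold d t) L' \<noteq> {}" by (rule SS_ne_inv[OF d0 t1 I])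
    from L obtain j where j: "j \<in> SS d (ATD_threshold d t) L'" and Lj: "L = up L' j"
      unfolding stepK_def using ne by auto
    have jd: "j < d" and lj: "L' j < ATD_threshold d t" using j SS_iff by auto
    have mono: "ATD_threshold d (t - 1) \<le> ATD_threshold d t" by (rule thr_mono[OF d0]) simp
    have "(\<Sum>k<d. L k) = Suc t - 1" using sum_up[OF jd, of L'] I t1 unfolding Lj Inv_def by simp
    moreover have "\<forall>k<d. L k \<le> ATD_threshold d (Suc t - 1)"
    proof (intro allI impI)
      fix k assume k: "k < d"
      show "L k \<le> ATD_threshold d (Suc t - 1)"
      proof (cases "k = j")
        case True then show ?thesis using lj Lj by simp
      next
        case False then show ?thesis using I k mono Lj unfolding Inv_def by (simp) (meson order.trans)
      qed
    qed
    ultimately show ?thesis unfolding Inv_def by simp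
  qed
qed

lemma exp_stepK:
  assumes "SS d (ATD_threshold d t) L \<noteq> {}"
  shows "measure_pmf.expectation (stepK d t L) g = OE d (ATD_threshold d t) L g"
  unfolding stepK_def OE_def using assms by (simp add: integral_pmf_of_set)

lemma exp_step:
  assumes d0: "0 < d" and t1: "1 \<le> t" and g0: "\<And>x. 0 \<le> g x" and gB: "\<And>x. g x \<le> B"
  shows "measure_pmf.expectation (Dist d (Suc t)) g = measure_pmf.expectation (Dist d t) (\<lambda>L. OE d (ATD_threshold d t) L g)"
proof -
  have "measure_pmf.expectation (Dist d (Suc t)) g = measure_pmf.expectation (Dist d t) (\<lambda>L. measure_pmf.expectation (stepK d t L) g)"
    using t1 by (simp add: exp_bind[OF g0 gB])
  also have "\<dots> = measure_pmf.expectation (Dist d t) (\<lambda>L. OE d (ATD_threshold d t) L g)"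
  proof (rule integral_cong_AE)
    show "AE L in measure_pmf (Dist d t). measure_pmf.expectation (stepK d t L) g = OE d (ATD_threshold d t) L g"
      unfolding AE_measure_pmf_iff
      using Dist_inv[OF d0 t1] SS_ne_inv[OF d0 t1] exp_stepK by blast
  qed simp_all
  finally show ?thesis .
qed

lemma OE_bounds:
  assumes "\<And>x. 0 \<le> g x" "\<And>x. g x \<le> B"
  shows "0 \<le> OE d th L g" "OE d th L g \<le> B"
proof -
  show "0 \<le> OE d th L g" by (rule OE_nonneg) (use assms in auto)
  have "0 \<le> B" using assms order.trans by blast
  then show "OE d th L g \<le> B" by (intro OE_le_const) (use assms in auto)
qed

lemma itO_bounds:
  assumes "\<And>x. 0 \<le> g x" "\<And>x. g x \<le> B"
  shows "0 \<le> itO d th n g L" "itO d th n g L \<le> B"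
proof -
  show "0 \<le> itO d th n g L" by (rule itO_nonneg) (use assms in auto)
  have "0 \<le> B" using assms order.trans by blast
  then show "itO d th n g L \<le> B" by (intro itO_le_const) (use assms in auto)
qed

lemma itO_shift: "itO d th (Suc n) g L = itO d th n (\<lambda>L. OE d th L g) L"
proof (induction n arbitrary: L)
  case 0
  have "itO d th 0 g = g" by (rule ext) simp
  then show ?case by simp
next
  case (Suc n)
  have e: "itO d th (Suc n) g = itO d th n (\<lambda>L. OE d th L g)" by (rule ext) (rule Suc.IH)
  have "itO d th (Suc (Suc n)) g L = OE d th L (itO d th (Suc n) g)" by simp
  also have "\<dots> = OE d th L (itO d th n (\<lambda>L. OE d th L g))" by (simp only: e)
  also have "\<dots> = itO d th (Suc n) (\<lambda>L. OE d th L g) L" by simp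
  finally show ?case .
qed

lemma exp_iter:
  assumes d0: "0 < d" and t1: "1 \<le> t" and th: "\<And>m. m < n \<Longrightarrow> ATD_threshold d (t + m) = th"
  shows "(\<And>x. 0 \<le> g x) \<Longrightarrow> (\<And>x. g x \<le> B) \<Longrightarrow>
    measure_pmf.expectation (Dist d (t + n)) g = measure_pmf.expectation (Dist d t) (itO d th n g)"
  using th
proof (induction n arbitrary: g)
  case 0 then show ?case by simp
next
  case (Suc n)
  have "measure_pmf.expectation (Dist d (t + Suc n)) g = measure_pmf.expectation (Dist d (t + n)) (\<lambda>L. OE d (ATD_threshold d (t + n)) L g)"
    using exp_step[OF d0 _ Suc.prems(1,2)] t1 by simp
  also have "\<dots> = measure_pmf.expectation (Dist d (t + n)) (\<lambda>L. OE d th L g)"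
    using Suc.prems(3)[of n] by simp
  also have "\<dots> = measure_pmf.expectation (Dist d t) (itO d th n (\<lambda>L. OE d th L g))"
    by (rule Suc.IH) (use OE_bounds[OF Suc.prems(1,2)] Suc.prems(3) in auto)
  also have "itO d th n (\<lambda>L. OE d th L g) = itO d th (Suc n) g" by (rule ext) (rule itO_shift[symmetric])
  finally show ?case .
qed


definition lamN :: real where "lamN = 1001 / 1000"

lemma lamN_ge1: "1 \<le> lamN" unfolding lamN_def by simp

lemma rho_bound:
  assumes "1 \<le> d"
  shows "lamN * ((1 - (1 - 1 / lamN) / real d) ^ d * (1 - (1 - 1 / lamN) / 480)) \<le> 1 - 1 / 10^6"
proof -
  define q :: real where "q = 1 / 1001"
  have q: "1 - 1 / lamN = q" unfolding lamN_def q_def by simp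
  have D: "real d \<ge> 1" using assms by simp
  have "(1 - q / real d) ^ d \<le> 1 / (1 + q)"
  proof (rule pow_le_inv)
    show "0 \<le> q / real d" "q / real d \<le> 1" using D unfolding q_def by (auto simp: field_simps)
    show "0 < 1 + q" unfolding q_def by simp
    have "1 + real d * (q / real d) \<le> (1 + q / real d) ^ d"
      by (rule Bernoulli_inequality) (use D in \<open>simp add: q_def field_simps\<close>)
    then show "1 + q \<le> (1 + q / real d) ^ d" using D by simp
  qed
  then have "lamN * ((1 - q / real d) ^ d * (1 - q / 480)) \<le> lamN * ((1 / (1 + q)) * (1 - q / 480))"
    unfolding q_def lamN_def by (intro mult_left_mono mult_right_mono) auto
  also have "\<dots> \<le> 1 - 1 / 10^6" unfolding q_def lamN_def by simp
  finally show ?thesis unfolding q .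
qed

lemma sq_le_pow: "(real r)^2 \<le> 4 * 10^6 * lamN ^ r"
proof (cases "r \<le> 1")
  case True
  then have "(real r)^2 \<le> 1" by (cases r) auto
  moreover have "1 \<le> lamN ^ r" using lamN_ge1 by simp
  ultimately show ?thesis by simp
next
  case False
  define p :: real where "p = 1 / 1000"
  have "1 + real r * p + real r * (real r - 1) / 2 * p^2 \<le> (1 + p) ^ r"
    by (rule binom2) (simp add: p_def)
  moreover have "1 + p = lamN" unfolding p_def lamN_def by simp
  ultimately have bl: "1 + real r * p + real r * (real r - 1) / 2 * p^2 \<le> lamN ^ r" by simp
  moreover have "0 \<le> real r * p" unfolding p_def by simp
  moreover have "(real r)^2 / 4 * p^2 \<le> real r * (real r - 1) / 2 * p^2"
  proof -
    have "(real r)^2 \<le> 2 * (real r * (real r - 1))" using False by (simp add: power2_eq_square algebra_simps) 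
    then have "(real r)^2 * (p^2/4) \<le> (2 * (real r * (real r - 1))) * (p^2/4)" by (rule mult_right_mono) simp
    moreover have "(real r)^2 / 4 * p^2 = (real r)^2 * (p^2/4)" by simp
    moreover have "real r * (real r - 1) / 2 * p^2 = (2 * (real r * (real r - 1))) * (p^2/4)" by simp
    ultimately show ?thesis by simp
  qed
  ultimately have "(real r)^2 / 4 * p^2 \<le> lamN ^ r" using bl by linarith
  then show ?thesis unfolding p_def by (simp add: field_simps)
qed

lemma Psi_nonneg: "1 \<le> lam \<Longrightarrow> 0 \<le> Psi d lam th L"
  unfolding Psi_def by (intro sum_nonneg) simp

lemma Psi_le: "1 \<le> lam \<Longrightarrow> Psi d lam th L \<le> real d * lam ^ th"
proof -
  assume l: "1 \<le> lam"
  have "Psi d lam th L \<le> (\<Sum>j<d. lam ^ th)" unfolding Psi_def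
    by (intro sum_mono power_increasing) (use l in auto)
  then show ?thesis by simp
qed

lemma Psi_up_le:
  assumes "1 \<le> lam" "j \<in> SS d th L"
  shows "Psi d lam th (up L j) \<le> Psi d lam th L"
  unfolding Psi_def
proof (rule sum_mono)
  fix k assume "k \<in> {..<d}"
  show "lam ^ (th - up L j k) \<le> lam ^ (th - L k)"
    by (cases "k = j") (use assms in \<open>auto intro: power_increasing\<close>)
qed

lemma itO_le_self:
  assumes g0: "\<And>L. 0 \<le> g L" and gu: "\<And>L j. j \<in> SS d th L \<Longrightarrow> g (up L j) \<le> g L"
  shows "itO d th n g L \<le> g L"
proof (induction n arbitrary: L)
  case 0 then show ?case by simp
next
  case (Suc n)
  have "OE d th L (itO d th n g) \<le> g L"
  proof (rule OE_le_const)
    show "0 \<le> g L" by (rule g0)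
    fix j assume "j \<in> SS d th L"
    then show "itO d th n g (up L j) \<le> g L" using Suc.IH[of "up L j"] gu by (meson order.trans)
  qed
  then show ?case by simp
qed

lemma cap_sum:
  fixes L :: "nat \<Rightarrow> nat"
  assumes "\<forall>j<d. L j \<le> th"
  shows "(\<Sum>j<d. th - L j) + (\<Sum>j<d. L j) = d * th"
proof -
  have "(\<Sum>j<d. th - L j) + (\<Sum>j<d. L j) = (\<Sum>j<d. (th - L j) + L j)" by (simp add: sum.distrib)
  also have "\<dots> = (\<Sum>j<d. th)"
  proof (rule sum.cong)
    fix x assume "x \<in> {..<d}"
    then have "L x \<le> th" using assms by simp
    then show "th - L x + L x = th" by (rule le_add_diff_inverse2)
  qed simp
  finally show ?thesis by simp
qed

lemma Psi_integrable: "integrable (measure_pmf p) (Psi d lamN th)"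
  by (rule bounded_integrable[where B="real d * lamN ^ th"]) (rule Psi_nonneg[OF lamN_ge1], rule Psi_le[OF lamN_ge1])

lemma itO_Psi_integrable: "integrable (measure_pmf p) (itO d th' n (Psi d lamN th))"
  by (rule bounded_integrable[where B="real d * lamN ^ th"])
     (rule itO_bounds(1)[OF Psi_nonneg[OF lamN_ge1] Psi_le[OF lamN_ge1]],
      rule itO_bounds(2)[OF Psi_nonneg[OF lamN_ge1] Psi_le[OF lamN_ge1]])

lemma Fbound:
  assumes d16: "16 \<le> d"
  shows "measure_pmf.expectation (Dist d (c * d + 1)) (Psi d lamN (c + 2)) \<le> 3 * 10^6 * real d"
proof (induction c)
  case 0
  have "measure_pmf.expectation (Dist d (0 * d + 1)) (Psi d lamN (0 + 2)) = Psi d lamN 2 (\<lambda>_. 0)" by (simp add: numeral_2_eq_2)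
  also have "\<dots> = real d * lamN^2" unfolding Psi_def by simp
  also have "\<dots> \<le> real d * (3 * 10^6)" unfolding lamN_def by (intro mult_left_mono) (auto simp: power2_eq_square)
  finally show ?case by simp
next
  case (Suc c)
  have d0: "0 < d" using d16 by simp
  define t0 where "t0 = c * d + 1"
  define rho where "rho = lamN * ((1 - (1 - 1 / lamN) / real d) ^ d * (1 - (1 - 1 / lamN) / 480))"
  define K where "K = (lamN + lamN^2) * real d"
  have rho0: "0 \<le> rho"
  proof -
    have x: "1 - 1 / lamN = 1 / 1001" unfolding lamN_def by simp
    have "(1 / 1001) / real d \<le> (1 / 1001) / 1" using d16 by (intro divide_left_mono) auto
    then have "(1 / 1001) / real d \<le> (1::real)" by simp
    then have "0 \<le> 1 - (1 - 1 / lamN) / real d" unfolding x by simp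
    moreover have "0 \<le> 1 - (1 - 1 / lamN) / 480" unfolding x by simp
    ultimately show ?thesis unfolding rho_def using lamN_ge1 by simp
  qed
  have t1: "1 \<le> t0" unfolding t0_def by simp
  have th: "ATD_threshold d (t0 + m) = c + 2" if "m < d" for m
    using thr_phase[OF d0 that, of c] unfolding t0_def by (simp add: algebra_simps)
  have e: "Suc c * d + 1 = t0 + d" unfolding t0_def by simp
  have "measure_pmf.expectation (Dist d (Suc c * d + 1)) (Psi d lamN (Suc c + 2))
      = measure_pmf.expectation (Dist d t0) (itO d (c + 2) d (Psi d lamN (Suc (c + 2))))"
  proof -
    have "measure_pmf.expectation (Dist d (t0 + d)) (Psi d lamN (Suc (c + 2)))
      = measure_pmf.expectation (Dist d t0) (itO d (c + 2) d (Psi d lamN (Suc (c + 2))))"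
    proof (rule exp_iter[OF d0 t1, where n=d and B="real d * lamN ^ Suc (c + 2)"])
      show "ATD_threshold d (t0 + m) = c + 2" if "m < d" for m using th[OF that] .
      show "0 \<le> Psi d lamN (Suc (c + 2)) x" for x by (rule Psi_nonneg[OF lamN_ge1])
      show "Psi d lamN (Suc (c + 2)) x \<le> real d * lamN ^ Suc (c + 2)" for x by (rule Psi_le[OF lamN_ge1])
    qed
    then show ?thesis unfolding e by simp
  qed
  also have "\<dots> \<le> measure_pmf.expectation (Dist d t0) (\<lambda>L. rho * Psi d lamN (c + 2) L + K)"
  proof (rule integral_mono_AE)
    show "integrable (measure_pmf (Dist d t0)) (itO d (c + 2) d (Psi d lamN (Suc (c + 2))))"
      by (rule itO_Psi_integrable)
    show "integrable (measure_pmf (Dist d t0)) (\<lambda>L. rho * Psi d lamN (c + 2) L + K)"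
      by (intro Bochner_Integration.integrable_add integrable_mult_right Psi_integrable) simp
    show "AE L in measure_pmf (Dist d t0). itO d (c + 2) d (Psi d lamN (Suc (c + 2))) L \<le> rho * Psi d lamN (c + 2) L + K"
      unfolding AE_measure_pmf_iff
    proof
      fix L assume L: "L \<in> set_pmf (Dist d t0)"
      have I: "Inv d t0 L" by (rule Dist_inv[OF d0 t1 L])
      have thr0: "ATD_threshold d (t0 - 1) = c + 1" unfolding t0_def using thr_phase0[OF d0, of c] by simp
      have Llt: "\<forall>j<d. L j < c + 2" using I thr0 unfolding Inv_def by fastforce
      have sL: "(\<Sum>j<d. L j) = c * d" using I unfolding Inv_def t0_def by simp
      have "(\<Sum>j<d. c + 2 - L j) + c * d = d * (c + 2)"
        using cap_sum[of d L "c + 2"] Llt sL by (simp add: less_imp_le)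
      then have cap: "(\<Sum>j<d. c + 2 - L j) = 2 * d" by (simp add: algebra_simps)
      show "itO d (c + 2) d (Psi d lamN (Suc (c + 2))) L \<le> rho * Psi d lamN (c + 2) L + K"
        using phase[OF lamN_ge1 d16 Llt cap] unfolding rho_def K_def by simp
    qed
  qed
  also have "\<dots> = rho * measure_pmf.expectation (Dist d t0) (Psi d lamN (c + 2)) + K"
    using Psi_integrable by simp
  also have "\<dots> \<le> (1 - 1 / 10^6) * (3 * 10^6 * real d) + K"
  proof -
    have "rho \<le> 1 - 1 / 10^6" unfolding rho_def by (rule rho_bound) (use d16 in simp)
    moreover have "0 \<le> measure_pmf.expectation (Dist d t0) (Psi d lamN (c + 2))"
      by (rule integral_nonneg_AE) (use Psi_nonneg[OF lamN_ge1] in auto)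
    ultimately have "rho * measure_pmf.expectation (Dist d t0) (Psi d lamN (c + 2)) \<le> (1 - 1 / 10^6) * (3 * 10^6 * real d)"
      using Suc.IH rho0 unfolding t0_def by (intro mult_mono) auto
    then show ?thesis by simp
  qed
  also have "\<dots> \<le> 3 * 10^6 * real d"
  proof -
    have "lamN + lamN^2 \<le> 3" unfolding lamN_def by (simp add: power2_eq_square)
    then have "K \<le> 3 * real d" unfolding K_def by (intro mult_right_mono) auto
    then show ?thesis by (simp add: algebra_simps)
  qed
  finally show ?case .
qed


lemma ds_nonneg: "0 \<le> real d / real (card A)" by simp

lemma ds_le: "real d / real (card A) \<le> real d"
proof (cases "card A = 0")
  case True then show ?thesis by simp
next
  case False
  then have "real (card A) \<ge> 1" by simp
  then have "real d / real (card A) \<le> real d / 1" by (intro divide_left_mono) auto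
  then show ?thesis by simp
qed

lemma ds_integrable: "integrable (measure_pmf p) (\<lambda>L. real d / real (card (SS d th L)))"
  by (rule bounded_integrable[where B="real d"]) (rule ds_nonneg, rule ds_le)

lemma ds_bound:
  assumes d0: "0 < d" and w: "w < d" and t: "t = c * d + w + 1" and I: "Inv d t L"
  shows "real d / real (card (SS d (c + 2) L)) \<le> 4 * 10^6 / real d * Psi d lamN (c + 2) L"
proof -
  define th where "th = c + 2"
  have tht: "ATD_threshold d t = th" unfolding t th_def by (rule thr_phase[OF d0 w])
  have sL: "(\<Sum>j<d. L j) = c * d + w" using I unfolding Inv_def t by simp
  have Lle: "\<forall>j<d. L j \<le> th"
  proof (intro allI impI)
    fix j assume "j < d"
    then have "L j \<le> ATD_threshold d (t - 1)" using I unfolding Inv_def by simp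
    also have "\<dots> \<le> ATD_threshold d t" by (rule thr_mono[OF d0]) simp
    finally show "L j \<le> th" using tht by simp
  qed
  have "(\<Sum>j<d. th - L j) + (c * d + w) = d * th" using cap_sum[OF Lle] sL by simp
  then have capd: "(\<Sum>j<d. th - L j) = 2 * d - w" unfolding th_def by (simp add: algebra_simps)
  have cap1: "d + 1 \<le> (\<Sum>j<d. th - L j)" using capd w by simp
  have capS: "(\<Sum>j\<in>SS d th L. th - L j) = (\<Sum>j<d. th - L j)"
  proof -
    have "(\<Sum>j\<in>SS d th L. th - L j) = (\<Sum>j\<in>{j\<in>{..<d}. L j < th}. th - L j)" unfolding SS_eq_filter ..
    also have "\<dots> = (\<Sum>j<d. if L j < th then th - L j else 0)" by (rule sum.inter_filter) simp
    also have "\<dots> = (\<Sum>j<d. th - L j)" by (intro sum.cong) auto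
    finally show ?thesis .
  qed
  define S where "S = SS d th L"
  define r where "r = (\<lambda>j. real (th - L j))"
  have ne: "S \<noteq> {}" unfolding S_def using cap1 by (intro cap_pos_SS) linarith
  have s1: "real (card S) \<ge> 1" using ne S_def by (simp add: card_gt_0_iff Suc_le_eq)
  have M: "real d + 1 \<le> (\<Sum>j\<in>S. r j)"
  proof -
    have "d + 1 \<le> (\<Sum>j\<in>S. th - L j)" using cap1 capS unfolding S_def by simp
    then have "real (d + 1) \<le> real (\<Sum>j\<in>S. th - L j)" by (rule of_nat_mono)
    then show ?thesis unfolding r_def of_nat_sum by simp
  qed
  have CS: "(\<Sum>j\<in>S. r j)^2 \<le> (\<Sum>j\<in>S. (r j)^2) * real (card S)"
    using Cauchy_Schwarz_ineq_sum[of r "\<lambda>_. 1" S] by simp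
  have "(real d + 1)^2 \<le> (\<Sum>j\<in>S. r j)^2" using M by (intro power_mono) auto
  then have key: "(real d)^2 \<le> (\<Sum>j\<in>S. (r j)^2) * real (card S)" using CS
    by (smt (verit) power_mono of_nat_0_le_iff)
  have "real d / real (card S) \<le> (\<Sum>j\<in>S. (r j)^2) / real d"
    using key s1 d0 by (simp add: field_simps power2_eq_square)
  also have "(\<Sum>j\<in>S. (r j)^2) \<le> (\<Sum>j\<in>S. 4 * 10^6 * lamN ^ (th - L j))"
    unfolding r_def by (intro sum_mono sq_le_pow)
  also have "\<dots> \<le> (\<Sum>j<d. 4 * 10^6 * lamN ^ (th - L j))"
    unfolding S_def by (intro sum_mono2) (use SS_sub lamN_ge1 in auto)
  also have "\<dots> = 4 * 10^6 * Psi d lamN th L" unfolding Psi_def by (simp add: sum_distrib_left)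
  finally have "real d / real (card S) \<le> 4 * 10^6 * Psi d lamN th L / real d" using d0 by (simp add: divide_right_mono)
  then show ?thesis unfolding S_def th_def by simp
qed

theorem partB:
  assumes d16: "16 \<le> d" and t1: "1 \<le> t"
  shows "measure_pmf.expectation (Dist d t) (\<lambda>L. real d / real (card (SS d (ATD_threshold d t) L))) \<le> 12 * 10^12"
proof -
  have d0: "0 < d" using d16 by simp
  define c where "c = (t - 1) div d"
  define w where "w = (t - 1) mod d"
  have w: "w < d" unfolding w_def using d0 by simp
  have t: "t = c * d + w + 1" unfolding c_def w_def using t1 by simp
  define t0 where "t0 = c * d + 1"
  have tt0: "t = t0 + w" unfolding t0_def using t by simp
  have t01: "1 \<le> t0" unfolding t0_def by simp
  have tht: "ATD_threshold d t = c + 2" unfolding t by (rule thr_phase[OF d0 w])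
  have "measure_pmf.expectation (Dist d t) (Psi d lamN (c + 2)) = measure_pmf.expectation (Dist d t0) (itO d (c + 2) w (Psi d lamN (c + 2)))"
    unfolding tt0
  proof (rule exp_iter[OF d0 t01, where B="real d * lamN ^ (c + 2)"])
    show "ATD_threshold d (t0 + m) = c + 2" if "m < w" for m
      using thr_phase[OF d0, of m c] that w unfolding t0_def by (simp add: algebra_simps)
    show "0 \<le> Psi d lamN (c + 2) x" for x by (rule Psi_nonneg[OF lamN_ge1])
    show "Psi d lamN (c + 2) x \<le> real d * lamN ^ (c + 2)" for x by (rule Psi_le[OF lamN_ge1])
  qed
  also have "\<dots> \<le> measure_pmf.expectation (Dist d t0) (Psi d lamN (c + 2))"
  proof (rule integral_mono)
    show "integrable (measure_pmf (Dist d t0)) (itO d (c + 2) w (Psi d lamN (c + 2)))" by (rule itO_Psi_integrable)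
    show "integrable (measure_pmf (Dist d t0)) (Psi d lamN (c + 2))" by (rule Psi_integrable)
    fix L show "itO d (c + 2) w (Psi d lamN (c + 2)) L \<le> Psi d lamN (c + 2) L"
      by (rule itO_le_self) (use Psi_nonneg[OF lamN_ge1] Psi_up_le[OF lamN_ge1] in auto)
  qed
  also have "\<dots> \<le> 3 * 10^6 * real d" unfolding t0_def by (rule Fbound[OF d16])
  finally have EP: "measure_pmf.expectation (Dist d t) (Psi d lamN (c + 2)) \<le> 3 * 10^6 * real d" .
  have "measure_pmf.expectation (Dist d t) (\<lambda>L. real d / real (card (SS d (ATD_threshold d t) L)))
      \<le> measure_pmf.expectation (Dist d t) (\<lambda>L. 4 * 10^6 / real d * Psi d lamN (c + 2) L)"
  proof (rule integral_mono_AE)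
    show "integrable (measure_pmf (Dist d t)) (\<lambda>L. real d / real (card (SS d (ATD_threshold d t) L)))"
      by (rule ds_integrable)
    show "integrable (measure_pmf (Dist d t)) (\<lambda>L. 4 * 10^6 / real d * Psi d lamN (c + 2) L)"
      by (intro integrable_mult_right Psi_integrable)
    show "AE L in measure_pmf (Dist d t). real d / real (card (SS d (ATD_threshold d t) L)) \<le> 4 * 10^6 / real d * Psi d lamN (c + 2) L"
      unfolding AE_measure_pmf_iff tht using ds_bound[OF d0 w t] Dist_inv[OF d0 t1] by blast
  qed
  also have "\<dots> = 4 * 10^6 / real d * measure_pmf.expectation (Dist d t) (Psi d lamN (c + 2))"
    by simp
  also have "\<dots> \<le> 4 * 10^6 / real d * (3 * 10^6 * real d)"
    using EP d0 by (intro mult_left_mono) auto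
  also have "\<dots> = 12 * 10^12" using d0 by simp
  finally show ?thesis .
qed

theorem partB_all:
  assumes d0: "0 < d" and t1: "1 \<le> t"
  shows "measure_pmf.expectation (Dist d t) (\<lambda>L. real d / real (card (SS d (ATD_threshold d t) L))) \<le> 12 * 10^12"
proof (cases "16 \<le> d")
  case True then show ?thesis by (rule partB[OF _ t1])
next
  case False
  have "measure_pmf.expectation (Dist d t) (\<lambda>L. real d / real (card (SS d (ATD_threshold d t) L))) \<le> measure_pmf.expectation (Dist d t) (\<lambda>L. real d)"
    by (rule integral_mono) (use ds_integrable ds_le in auto)
  also have "\<dots> = real d" by simp
  also have "\<dots> \<le> 12 * 10^12" using False by simp
  finally show ?thesis .
qed


fun Cn :: "nat set \<Rightarrow> (nat stream \<Rightarrow> ennreal) \<Rightarrow> nat \<Rightarrow> nat stream \<Rightarrow> ennreal" where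
  "Cn A f 0 xs = f xs"
| "Cn A f (Suc k) xs = indicator (-A) (shd xs) * Cn A f k (stl xs)"

lemma Cn_meas:
  assumes "f \<in> borel_measurable (stream_space (measure_pmf p))"
  shows "Cn A f k \<in> borel_measurable (stream_space (measure_pmf p))"
proof (induction k)
  case 0 then show ?case using assms by simp
next
  case (Suc k)
  have i: "(\<lambda>xs. indicator (-A) (shd xs) :: ennreal) \<in> borel_measurable (stream_space (measure_pmf p))"
    by (rule measurable_compose[OF measurable_shd]) simp
  have c: "(\<lambda>xs. Cn A f k (stl xs)) \<in> borel_measurable (stream_space (measure_pmf p))"
    by (rule measurable_compose[OF measurable_stl Suc.IH])
  show ?case using borel_measurable_times_ennreal[OF i c] by simp
qed

lemma Cn_int:
  assumes f: "f \<in> borel_measurable (stream_space (measure_pmf p))"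
  shows "(\<integral>\<^sup>+xs. Cn A f k xs \<partial>stream_space (measure_pmf p)) = emeasure (measure_pmf p) (-A) ^ k * (\<integral>\<^sup>+xs. f xs \<partial>stream_space (measure_pmf p))"
proof (induction k)
  case 0 then show ?case by simp
next
  case (Suc k)
  have m: "Cn A f (Suc k) \<in> borel_measurable (stream_space (measure_pmf p))" by (rule Cn_meas[OF f])
  have "(\<integral>\<^sup>+xs. Cn A f (Suc k) xs \<partial>stream_space (measure_pmf p)) =
      (\<integral>\<^sup>+x. (\<integral>\<^sup>+X. Cn A f (Suc k) (x ## X) \<partial>stream_space (measure_pmf p)) \<partial>measure_pmf p)"
    by (rule prob_space.nn_integral_stream_space[OF prob_space_measure_pmf m])
  also have "\<dots> = (\<integral>\<^sup>+x. indicator (-A) x * (\<integral>\<^sup>+X. Cn A f k X \<partial>stream_space (measure_pmf p)) \<partial>measure_pmf p)"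
    by (intro nn_integral_cong) (simp add: nn_integral_cmult[OF Cn_meas[OF f]])
  also have "\<dots> = (\<integral>\<^sup>+x. indicator (-A) x \<partial>measure_pmf p) * (\<integral>\<^sup>+X. Cn A f k X \<partial>stream_space (measure_pmf p))"
    by (rule nn_integral_multc) simp
  also have "\<dots> = emeasure (measure_pmf p) (-A) * (\<integral>\<^sup>+X. Cn A f k X \<partial>stream_space (measure_pmf p))"
    by simp
  finally show ?case using Suc.IH by (simp add: mult.assoc)
qed

lemma Cn_char: "Cn A f k xs = (\<Prod>m<k. indicator (-A) (xs !! m)) * f (sdrop k xs)"
proof (induction k arbitrary: xs)
  case 0 then show ?case by simp
next
  case (Suc k)
  show ?case by (simp del: prod.lessThan_Suc add: Suc.IH prod.lessThan_Suc_shift mult.assoc)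
qed

lemma prod_ind_one:
  assumes "\<And>m. m < k \<Longrightarrow> xs !! m \<notin> A"
  shows "(\<Prod>m<k. indicator (-A) (xs !! m) :: ennreal) = 1"
  using assms by (intro prod.neutral) auto

lemma geo_ennreal:
  fixes r :: real
  assumes "0 \<le> r" "r < 1"
  shows "(\<Sum>k. ennreal (r ^ k)) = ennreal (1 / (1 - r))"
  using assms by (intro suminf_ennreal_eq geometric_sums) auto


context
  fixes d :: nat and A :: "nat set"
  assumes d0: "0 < d" and Asub: "A \<subseteq> {..<d}" and Ane: "A \<noteq> {}"
begin

abbreviation "M0 \<equiv> measure_pmf (pmf_of_set {..<d})"
abbreviation "NN \<equiv> stream_space M0"

definition rr :: real where "rr = real (d - card A) / real d"

lemma finA: "finite A" using Asub finite_subset by blast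

lemma cardA: "1 \<le> card A" "card A \<le> d"
proof -
  show "1 \<le> card A" using Ane finA by (simp add: Suc_le_eq card_gt_0_iff)
  show "card A \<le> d" using card_mono[OF _ Asub] by simp
qed

lemma rr_bounds: "0 \<le> rr" "rr < 1"
proof -
  show "0 \<le> rr" unfolding rr_def by simp
  have "real (d - card A) < real d" using cardA d0 by simp
  then show "rr < 1" unfolding rr_def using d0 by simp
qed

lemma rr_inv: "1 / (1 - rr) = real d / real (card A)"
proof -
  have "real (d - card A) = real d - real (card A)" using cardA by (simp add: of_nat_diff)
  then have "1 - rr = real (card A) / real d" unfolding rr_def using d0 by (simp add: field_simps)
  then show ?thesis by simp
qed

lemma emeasure_compl: "emeasure M0 (-A) = ennreal rr"
proof -
  have ne: "{..<d} \<noteq> {}" using d0 by auto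
  have cd: "card ({..<d} \<inter> -A) = d - card A"
  proof -
    have "{..<d} \<inter> -A = {..<d} - A" by auto
    then show ?thesis using Asub finA by (simp add: card_Diff_subset)
  qed
  show ?thesis using emeasure_pmf_of_set[OF ne, of "-A"] cd d0 unfolding rr_def
    by (simp add: divide_ennreal ennreal_of_nat_eq_real_of_nat)
qed

lemma NN_prob: "prob_space NN"
  by (rule prob_space.prob_space_stream_space[OF prob_space_measure_pmf])

lemma int_one: "(\<integral>\<^sup>+xs. 1 \<partial>NN) = 1"
  using prob_space.emeasure_space_1[OF NN_prob] by simp

lemma Cn_one_int: "(\<integral>\<^sup>+xs. Cn A (\<lambda>_. 1) k xs \<partial>NN) = ennreal (rr ^ k)"
  using Cn_int[of "\<lambda>_. 1" "pmf_of_set {..<d}" A k] int_one emeasure_compl rr_bounds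
  by (simp add: ennreal_power)

lemma Cn_one_meas: "Cn A (\<lambda>_. 1) k \<in> borel_measurable NN"
  by (rule Cn_meas) simp

lemma ns_bound:
  "(\<integral>\<^sup>+xs. ennreal (real (Suc (LEAST k. xs !! k \<in> A))) \<partial>NN) \<le> ennreal (real d / real (card A))"
proof -
  have pw: "ennreal (real (Suc (LEAST k. xs !! k \<in> A))) \<le> (\<Sum>k. Cn A (\<lambda>_. 1) k xs)" for xs
  proof -
    define K where "K = (LEAST k. xs !! k \<in> A)"
    have "ennreal (real (Suc K)) = (\<Sum>k<Suc K. (1::ennreal))" by (simp add: ennreal_of_nat_eq_real_of_nat)
    also have "\<dots> = (\<Sum>k<Suc K. Cn A (\<lambda>_. 1) k xs)"
    proof (intro sum.cong refl)
      fix k assume "k \<in> {..<Suc K}"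
      then have kK: "k \<le> K" by simp
      have "xs !! m \<notin> A" if "m < k" for m
      proof -
        have "m < K" using that kK by simp
        then show ?thesis unfolding K_def by (rule not_less_Least)
      qed
      then show "1 = Cn A (\<lambda>_. 1) k xs" unfolding Cn_char using prod_ind_one[of k xs A] by simp
    qed
    also have "\<dots> \<le> (\<Sum>k. Cn A (\<lambda>_. 1) k xs)" by (rule sum_le_suminf[OF summableI]) auto
    finally show ?thesis unfolding K_def .
  qed
  have "(\<integral>\<^sup>+xs. ennreal (real (Suc (LEAST k. xs !! k \<in> A))) \<partial>NN) \<le> (\<integral>\<^sup>+xs. (\<Sum>k. Cn A (\<lambda>_. 1) k xs) \<partial>NN)"
    by (rule nn_integral_mono) (rule pw)
  also have "\<dots> = (\<Sum>k. (\<integral>\<^sup>+xs. Cn A (\<lambda>_. 1) k xs \<partial>NN))"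
    by (rule nn_integral_suminf) (rule Cn_one_meas)
  also have "\<dots> = (\<Sum>k. ennreal (rr ^ k))" by (simp only: Cn_one_int)
  also have "\<dots> = ennreal (1 / (1 - rr))" by (rule geo_ennreal[OF rr_bounds])
  finally show ?thesis unfolding rr_inv .
qed

lemma pred_in_A[measurable]: "(\<lambda>x. x \<in> A) \<in> measurable M0 (count_space UNIV)"
  by simp

lemma Nev_sets: "{xs \<in> space NN. \<forall>k. xs !! k \<notin> A} \<in> sets NN"
  by measurable

lemma AE_exists: "AE xs in NN. \<exists>k. xs !! k \<in> A"
proof (rule AE_I')
  define Nev where "Nev = {xs \<in> space NN. \<forall>k. xs !! k \<notin> A}"
  have S: "Nev \<in> sets NN" unfolding Nev_def by (rule Nev_sets)
  have le: "emeasure NN Nev \<le> ennreal (rr ^ k)" for k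
  proof -
    have "emeasure NN Nev = (\<integral>\<^sup>+xs. indicator Nev xs \<partial>NN)" using S by simp
    also have "\<dots> \<le> (\<integral>\<^sup>+xs. Cn A (\<lambda>_. 1) k xs \<partial>NN)"
    proof (rule nn_integral_mono)
      fix xs
      show "indicator Nev xs \<le> Cn A (\<lambda>_. 1) k xs"
      proof (cases "xs \<in> Nev")
        case True
        then have "\<And>m. m < k \<Longrightarrow> xs !! m \<notin> A" unfolding Nev_def by auto
        then show ?thesis using True unfolding Cn_char by (simp add: prod_ind_one)
      next
        case False then show ?thesis by simp
      qed
    qed
    also have "\<dots> = ennreal (rr ^ k)" by (rule Cn_one_int)
    finally show ?thesis .
  qed
  have lim: "(\<lambda>k. ennreal (rr ^ k)) \<longlonglongrightarrow> ennreal 0"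
    by (intro tendsto_ennrealI LIMSEQ_power_zero) (use rr_bounds in auto)
  have "emeasure NN Nev \<le> ennreal 0"
    by (rule LIMSEQ_le_const[OF lim]) (use le in auto)
  then have "emeasure NN Nev = 0" by simp
  then show "Nev \<in> null_sets NN" using S by auto
  show "{xs \<in> space NN. \<not> (\<exists>k. xs !! k \<in> A)} \<subseteq> Nev" unfolding Nev_def by auto
qed

lemma pick_law:
  "(\<integral>\<^sup>+xs. phi (xs !! (LEAST k. xs !! k \<in> A)) \<partial>NN) = (\<Sum>j\<in>A. phi j) / of_nat (card A)"
proof -
  define f where "f = (\<lambda>ys. indicator A (shd ys) * phi (shd ys) :: ennreal)"
  have fm: "f \<in> borel_measurable NN" unfolding f_def
    by (rule measurable_compose[OF measurable_shd, where g="\<lambda>x. indicator A x * phi x"]) simp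
  have ae: "AE xs in NN. phi (xs !! (LEAST k. xs !! k \<in> A)) = (\<Sum>k. Cn A f k xs)"
    using AE_exists
  proof (rule AE_mp, intro AE_I2 impI)
    fix xs assume ex: "\<exists>k. xs !! k \<in> A"
    define K where "K = (LEAST k. xs !! k \<in> A)"
    have KA: "xs !! K \<in> A" unfolding K_def using ex by (metis LeastI)
    have Cnk: "Cn A f k xs = (if k = K then phi (xs !! K) else 0)" for k
    proof -
      have eq: "Cn A f k xs = (\<Prod>m<k. indicator (-A) (xs !! m)) * (indicator A (xs !! k) * phi (xs !! k))"
        unfolding Cn_char f_def by simp
      consider "k < K" | "k = K" | "K < k" by linarith
      then show ?thesis
      proof cases
        case 1
        then have "xs !! k \<notin> A" unfolding K_def by (rule not_less_Least)
        then show ?thesis using eq 1 by simp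
      next
        case 2
        then have "\<And>m. m < k \<Longrightarrow> xs !! m \<notin> A" unfolding K_def using not_less_Least by blast
        then show ?thesis using eq 2 KA by (simp add: prod_ind_one)
      next
        case 3
        have "(\<Prod>m<k. indicator (-A) (xs !! m) :: ennreal) = 0"
        proof (rule prod_zero)
          show "finite {..<k}" by simp
          show "\<exists>a\<in>{..<k}. indicator (- A) (xs !! a) = (0::ennreal)"
            using 3 KA by (intro bexI[of _ K]) auto
        qed
        then show ?thesis using eq 3 by simp
      qed
    qed
    have "(\<Sum>k. Cn A f k xs) = phi (xs !! K)"
      unfolding Cnk using sums_single[of K "\<lambda>_. phi (xs !! K)"] by (simp add: sums_iff)
    then show "phi (xs !! (LEAST k. xs !! k \<in> A)) = (\<Sum>k. Cn A f k xs)" unfolding K_def by simp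
  qed
  have c: "(\<integral>\<^sup>+ys. f ys \<partial>NN) = (\<Sum>j\<in>A. phi j) / of_nat d"
  proof -
    have "(\<integral>\<^sup>+ys. f ys \<partial>NN) = (\<integral>\<^sup>+x. (\<integral>\<^sup>+X. f (x ## X) \<partial>NN) \<partial>M0)"
      by (rule prob_space.nn_integral_stream_space[OF prob_space_measure_pmf fm])
    also have "\<dots> = (\<integral>\<^sup>+x. indicator A x * phi x \<partial>M0)"
      unfolding f_def using int_one by (simp add: nn_integral_cmult)
    also have "\<dots> = (\<Sum>j\<in>{..<d}. indicator A j * phi j) / of_nat (card {..<d})"
      by (rule nn_integral_pmf_of_set) (use d0 in auto)
    also have "(\<Sum>j\<in>{..<d}. indicator A j * phi j) = (\<Sum>j\<in>A. phi j)"
    proof -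
      have "(\<Sum>j\<in>{..<d}. indicator A j * phi j) = (\<Sum>j\<in>A. indicator A j * phi j)"
        by (rule sum.mono_neutral_right) (use Asub in auto)
      also have "\<dots> = (\<Sum>j\<in>A. phi j)" by (intro sum.cong) auto
      finally show ?thesis .
    qed
    finally show ?thesis by simp
  qed
  have "(\<integral>\<^sup>+xs. phi (xs !! (LEAST k. xs !! k \<in> A)) \<partial>NN) = (\<integral>\<^sup>+xs. (\<Sum>k. Cn A f k xs) \<partial>NN)"
    by (rule nn_integral_cong_AE[OF ae])
  also have "\<dots> = (\<Sum>k. (\<integral>\<^sup>+xs. Cn A f k xs \<partial>NN))"
    by (rule nn_integral_suminf) (rule Cn_meas[OF fm])
  also have "\<dots> = (\<Sum>k. ennreal (rr ^ k) * ((\<Sum>j\<in>A. phi j) / of_nat d))"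
    by (simp only: Cn_int[OF fm] emeasure_compl c ennreal_power[OF rr_bounds(1)])
  also have "\<dots> = ennreal (real d / real (card A)) * ((\<Sum>j\<in>A. phi j) / of_nat d)"
    using geo_ennreal[OF rr_bounds] rr_inv by simp
  also have "\<dots> = (\<Sum>j\<in>A. phi j) / of_nat (card A)"
  proof -
    define X where "X = (\<Sum>j\<in>A. phi j)"
    have "ennreal (real d / real (card A)) = of_nat d / of_nat (card A)"
      using cardA by (simp add: ennreal_of_nat_eq_real_of_nat divide_ennreal)
    then have "ennreal (real d / real (card A)) * (X / of_nat d) = (of_nat d / of_nat (card A)) * (X / of_nat d)" by simp
    also have "\<dots> = of_nat d * (X / of_nat d / of_nat (card A))" by (simp add: ennreal_divide_times)
    also have "\<dots> = X * of_nat d / of_nat d / of_nat (card A)" by (simp add: ennreal_times_divide ennreal_divide_times mult.commute)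
    also have "X * of_nat d / of_nat d = X"
      by (rule ennreal_mult_divide_eq) (use d0 in \<open>simp_all add: of_nat_neq_0\<close>)
    finally show ?thesis unfolding X_def .
  qed
  finally show ?thesis .
qed

end


lemma suit_iff: "ATD_suitable d L t i \<longleftrightarrow> i \<in> SS d (ATD_threshold d t) L"
  unfolding ATD_suitable_def SS_iff by simp

lemma pick_eq: "ATD_pick d L t xs = xs !! (LEAST k. xs !! k \<in> SS d (ATD_threshold d t) L)"
  unfolding ATD_pick_def suit_iff ..

lemma ns_eq: "ATD_nsamples d L t xs = Suc (LEAST k. xs !! k \<in> SS d (ATD_threshold d t) L)"
  unfolding ATD_nsamples_def suit_iff ..

lemma ATD_L_Suc: "1 \<le> t \<Longrightarrow> ATD_L d \<omega> (Suc t) = up (ATD_L d \<omega> t) (ATD_pick d (ATD_L d \<omega> t) t (\<omega> !! t))"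
  by (cases t) (auto simp: up_def Let_def)

lemma snth_count: "(\<lambda>xs. xs !! i) \<in> measurable (stream_space (measure_pmf p)) (count_space UNIV)"
  by (rule measurable_compose[OF measurable_snth]) simp

lemma least_meas: "(\<lambda>xs. LEAST k. xs !! k \<in> A) \<in> measurable (stream_space (measure_pmf p)) (count_space UNIV)"
proof (rule measurable_Least)
  fix i
  show "(\<lambda>xs. xs !! i \<in> A) \<in> measurable (stream_space (measure_pmf p)) (count_space UNIV)"
    by (rule measurable_compose[OF measurable_snth]) simp
qed

lemma pick_meas: "(\<lambda>xs. ATD_pick d L t xs) \<in> measurable (stream_space (measure_pmf p)) (count_space UNIV)"
  unfolding pick_eq
  by (rule measurable_compose_countable'[where f="\<lambda>i xs. xs !! i" and I=UNIV, OF snth_count least_meas]) simp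

lemma ns_meas: "(\<lambda>xs. F (ATD_nsamples d L t xs)) \<in> measurable (stream_space (measure_pmf p)) (count_space UNIV)"
proof -
  have "(\<lambda>xs. ATD_nsamples d L t xs) \<in> measurable (stream_space (measure_pmf p)) (count_space UNIV)"
    unfolding ns_eq by (rule measurable_compose[OF least_meas]) simp
  then show ?thesis by (rule measurable_compose) simp
qed

lemma ns_meas_borel: "(\<lambda>xs. (F (ATD_nsamples d L t xs)) :: ennreal) \<in> borel_measurable (stream_space (measure_pmf p))"
proof -
  have "(\<lambda>xs. ATD_nsamples d L t xs) \<in> measurable (stream_space (measure_pmf p)) (count_space UNIV)"
    unfolding ns_eq by (rule measurable_compose[OF least_meas]) simp
  then show ?thesis by (rule measurable_compose) simp
qed

context
  fixes d :: nat
  assumes d0: "0 < d"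
begin

abbreviation "M0' \<equiv> measure_pmf (pmf_of_set {..<d})"
abbreviation "N' \<equiv> stream_space M0'"

lemma N_prob: "prob_space N'"
  by (rule prob_space.prob_space_stream_space[OF prob_space_measure_pmf])

lemma S_eq: "ATD_space d = stream_space N'" unfolding ATD_space_def ..

lemma partA:
  "1 \<le> t \<Longrightarrow> (\<And>L. g L \<in> borel_measurable (ATD_space d)) \<Longrightarrow>
   (\<integral>\<^sup>+\<omega>. g (ATD_L d \<omega> t) (sdrop t \<omega>) \<partial>ATD_space d) = (\<integral>\<^sup>+L. (\<integral>\<^sup>+\<omega>'. g L \<omega>' \<partial>ATD_space d) \<partial>measure_pmf (Dist d t))"
proof (induction t arbitrary: g)
  case 0 then show ?case by simp
next
  case (Suc t)
  show ?case
  proof (cases "t = 0")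
    case True
    have m: "(\<lambda>\<omega>. g (\<lambda>_. 0) (stl \<omega>)) \<in> borel_measurable (stream_space N')"
      using measurable_compose[OF measurable_stl Suc.prems(2)[of "\<lambda>_. 0", unfolded S_eq]] .
    have "(\<integral>\<^sup>+\<omega>. g (ATD_L d \<omega> (Suc t)) (sdrop (Suc t) \<omega>) \<partial>ATD_space d) = (\<integral>\<^sup>+\<omega>. g (\<lambda>_. 0) (stl \<omega>) \<partial>stream_space N')"
      using True unfolding S_eq by simp
    also have "\<dots> = (\<integral>\<^sup>+x. (\<integral>\<^sup>+X. g (\<lambda>_. 0) X \<partial>stream_space N') \<partial>N')"
      using prob_space.nn_integral_stream_space[OF N_prob m] by simp
    also have "\<dots> = (\<integral>\<^sup>+X. g (\<lambda>_. 0) X \<partial>stream_space N')"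
      using prob_space.emeasure_space_1[OF N_prob] by simp
    also have "\<dots> = (\<integral>\<^sup>+L. (\<integral>\<^sup>+\<omega>'. g L \<omega>' \<partial>ATD_space d) \<partial>measure_pmf (Dist d (Suc t)))"
      using True unfolding S_eq by simp
    finally show ?thesis .
  next
    case False
    then have t1: "1 \<le> t" by simp
    define h where "h = (\<lambda>L \<omega>'. g (up L (ATD_pick d L t (shd \<omega>'))) (stl \<omega>'))"
    have hm: "h L \<in> borel_measurable (ATD_space d)" for L
    proof -
      have sel: "(\<lambda>\<omega>'. ATD_pick d L t (shd \<omega>')) \<in> measurable (stream_space N') (count_space UNIV)"
        by (rule measurable_compose[OF measurable_shd pick_meas])
      have fi: "(\<lambda>\<omega>'. g (up L j) (stl \<omega>')) \<in> borel_measurable (stream_space N')" for j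
        using measurable_compose[OF measurable_stl Suc.prems(2)[of "up L j", unfolded S_eq]] .
      show ?thesis unfolding h_def S_eq
        by (rule measurable_compose_countable'[where f="\<lambda>j \<omega>'. g (up L j) (stl \<omega>')" and I=UNIV, OF fi sel]) simp
    qed
    have "(\<integral>\<^sup>+\<omega>. g (ATD_L d \<omega> (Suc t)) (sdrop (Suc t) \<omega>) \<partial>ATD_space d) = (\<integral>\<^sup>+\<omega>. h (ATD_L d \<omega> t) (sdrop t \<omega>) \<partial>ATD_space d)"
      unfolding h_def by (intro nn_integral_cong) (simp add: ATD_L_Suc[OF t1])
    also have "\<dots> = (\<integral>\<^sup>+L. (\<integral>\<^sup>+\<omega>'. h L \<omega>' \<partial>ATD_space d) \<partial>measure_pmf (Dist d t))"
      by (rule Suc.IH[OF t1 hm])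
    also have "\<dots> = (\<integral>\<^sup>+L. (\<integral>\<^sup>+L'. (\<integral>\<^sup>+\<omega>'. g L' \<omega>' \<partial>ATD_space d) \<partial>measure_pmf (stepK d t L)) \<partial>measure_pmf (Dist d t))"
    proof (rule nn_integral_cong_AE)
      show "AE L in measure_pmf (Dist d t). (\<integral>\<^sup>+\<omega>'. h L \<omega>' \<partial>ATD_space d) = (\<integral>\<^sup>+L'. (\<integral>\<^sup>+\<omega>'. g L' \<omega>' \<partial>ATD_space d) \<partial>measure_pmf (stepK d t L))"
        unfolding AE_measure_pmf_iff
      proof
        fix L assume L: "L \<in> set_pmf (Dist d t)"
        define A where "A = SS d (ATD_threshold d t) L"
        have Ane: "A \<noteq> {}" unfolding A_def using SS_ne_inv[OF d0 t1 Dist_inv[OF d0 t1 L]] .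
        have Asub: "A \<subseteq> {..<d}" unfolding A_def by (rule SS_sub)
        define G where "G = (\<lambda>L'. (\<integral>\<^sup>+\<omega>'. g L' \<omega>' \<partial>ATD_space d))"
        have "(\<integral>\<^sup>+\<omega>'. h L \<omega>' \<partial>ATD_space d) = (\<integral>\<^sup>+x. (\<integral>\<^sup>+X. h L (x ## X) \<partial>stream_space N') \<partial>N')"
          unfolding S_eq using prob_space.nn_integral_stream_space[OF N_prob hm[of L, unfolded S_eq]] .
        also have "\<dots> = (\<integral>\<^sup>+x. G (up L (x !! (LEAST k. x !! k \<in> A))) \<partial>N')"
          unfolding h_def G_def S_eq A_def pick_eq by simp
        also have "\<dots> = (\<Sum>j\<in>A. G (up L j)) / of_nat (card A)"
          by (rule pick_law[OF d0 Asub Ane])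
        also have "\<dots> = (\<integral>\<^sup>+L'. G L' \<partial>measure_pmf (stepK d t L))"
          unfolding stepK_def A_def[symmetric] using Ane Asub finite_subset[OF Asub]
          by (simp add: nn_integral_pmf_of_set)
        finally show "(\<integral>\<^sup>+\<omega>'. h L \<omega>' \<partial>ATD_space d) = (\<integral>\<^sup>+L'. (\<integral>\<^sup>+\<omega>'. g L' \<omega>' \<partial>ATD_space d) \<partial>measure_pmf (stepK d t L))"
          unfolding G_def .
      qed
    qed
    also have "\<dots> = (\<integral>\<^sup>+L'. (\<integral>\<^sup>+\<omega>'. g L' \<omega>' \<partial>ATD_space d) \<partial>measure_pmf (Dist d t \<bind> stepK d t))"
      by (rule nn_integral_bind_pmf[symmetric])
    also have "Dist d t \<bind> stepK d t = Dist d (Suc t)" using False by simp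
    finally show ?thesis .
  qed
qed

theorem main_bound:
  assumes t1: "1 \<le> t"
  shows "(\<integral>\<^sup>+\<omega>. ennreal (real (ATD_nsamples d (ATD_L d \<omega> t) t (\<omega> !! t))) \<partial>ATD_space d) \<le> ennreal (12 * 10^12)"
proof -
  define gN where "gN = (\<lambda>L \<omega>'. ennreal (real (ATD_nsamples d L t (shd \<omega>'))))"
  have gm: "gN L \<in> borel_measurable (ATD_space d)" for L
    unfolding gN_def S_eq
    by (rule measurable_compose[OF measurable_shd ns_meas_borel])
  have "(\<integral>\<^sup>+\<omega>. ennreal (real (ATD_nsamples d (ATD_L d \<omega> t) t (\<omega> !! t))) \<partial>ATD_space d)
      = (\<integral>\<^sup>+\<omega>. gN (ATD_L d \<omega> t) (sdrop t \<omega>) \<partial>ATD_space d)"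
    unfolding gN_def by simp
  also have "\<dots> = (\<integral>\<^sup>+L. (\<integral>\<^sup>+\<omega>'. gN L \<omega>' \<partial>ATD_space d) \<partial>measure_pmf (Dist d t))"
    by (rule partA[OF t1 gm])
  also have "\<dots> \<le> (\<integral>\<^sup>+L. ennreal (real d / real (card (SS d (ATD_threshold d t) L))) \<partial>measure_pmf (Dist d t))"
  proof (rule nn_integral_mono_AE)
    show "AE L in measure_pmf (Dist d t). (\<integral>\<^sup>+\<omega>'. gN L \<omega>' \<partial>ATD_space d) \<le> ennreal (real d / real (card (SS d (ATD_threshold d t) L)))"
      unfolding AE_measure_pmf_iff
    proof
      fix L assume L: "L \<in> set_pmf (Dist d t)"
      define A where "A = SS d (ATD_threshold d t) L"
      have Ane: "A \<noteq> {}" unfolding A_def using SS_ne_inv[OF d0 t1 Dist_inv[OF d0 t1 L]] .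
      have Asub: "A \<subseteq> {..<d}" unfolding A_def by (rule SS_sub)
      have "(\<integral>\<^sup>+\<omega>'. gN L \<omega>' \<partial>ATD_space d) = (\<integral>\<^sup>+x. (\<integral>\<^sup>+X. gN L (x ## X) \<partial>stream_space N') \<partial>N')"
        unfolding S_eq using prob_space.nn_integral_stream_space[OF N_prob gm[of L, unfolded S_eq]] .
      also have "\<dots> = (\<integral>\<^sup>+x. ennreal (real (Suc (LEAST k. x !! k \<in> A))) \<partial>N')"
        unfolding gN_def A_def ns_eq
        using prob_space.emeasure_space_1[OF N_prob] prob_space.emeasure_space_1[OF prob_space.prob_space_stream_space[OF N_prob]]
        by simp
      also have "\<dots> \<le> ennreal (real d / real (card A))" by (rule ns_bound[OF d0 Asub Ane])
      finally show "(\<integral>\<^sup>+\<omega>'. gN L \<omega>' \<partial>ATD_space d) \<le> ennreal (real d / real (card (SS d (ATD_threshold d t) L)))"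
        unfolding A_def .
    qed
  qed
  also have "\<dots> = ennreal (measure_pmf.expectation (Dist d t) (\<lambda>L. real d / real (card (SS d (ATD_threshold d t) L))))"
    by (rule nn_integral_eq_integral) (use ds_integrable in auto)
  also have "\<dots> \<le> ennreal (12 * 10^12)"
    by (rule ennreal_leI) (rule partB_all[OF d0 t1])
  finally show ?thesis .
qed

end



theorem lemma3p11:
  shows "\<exists>C::real. \<forall>n d t. 0 < d \<longrightarrow> d dvd n \<longrightarrow> 1 \<le> t \<longrightarrow> t \<le> n - 2 * d \<longrightarrow>
     (\<integral>\<^sup>+ \<omega>. ennreal (real (ATD_nsamples d (ATD_L d \<omega> t) t (\<omega> !! t))) \<partial>ATD_space d)
       \<le> ennreal C"
proof (intro exI allI impI)
  fix n d t :: nat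
  assume d0: "0 < d" and "d dvd n" and t1: "1 \<le> t" and "t \<le> n - 2 * d"
  show "(\<integral>\<^sup>+ \<omega>. ennreal (real (ATD_nsamples d (ATD_L d \<omega> t) t (\<omega> !! t))) \<partial>ATD_space d)
       \<le> ennreal (12 * 10^12)"
    by (rule main_bound[OF d0 t1])
qed

end
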